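(* Let $A$ be a $0$-$1$ matrix over a set $\mathcal G$ with no identically zero rows. For $\xi\in\widetilde\Omega_A$ let $R_\xi(e)=\{x\in\mathcal G:x^{-1}\in\xi\}\in2^{\mathcal G}$, and let $\sigma(\xi)_1$ be the unique element of $\xi\cap\mathcal G$ if this set is nonempty and $\sigma(\xi)_1=\star\in\tilde{\mathcal G}$ otherwise. (i) The map $\xi\mapsto(\sigma(\xi)_1,R_\xi(e))$ is a continuous surjection of $\widetilde\Omega_A$ onto $\tilde\Gamma_A$, mapping $\Omega_A$ onto $\Gamma_A$. (ii) The homomorphism $\psi:\tilde R_A\to C(\widetilde\Omega_A)$ defined by $\psi(f)(\xi)=\hat f(\sigma(\xi)_1,R_\xi(e))$ is injective and satisfies $\psi(\delta_i)=P_i$ and $\psi(\rho_i)=Q_i$ for all $i\in\mathcal G$, where $P_i$ and $Q_i$ are the characteristic functions of $\Delta_i$ and $\Delta_{i^{-1}}$ respectively. Consequently $\tilde R_A\cong C^*(\{\mathbf I,P_i,Q_i:i\in\mathcal G\})$ and $R_A\cong C^*(\{P_i,Q_i:i\in\mathcal G\})$.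
   Context: $\mathbb F$ is the free group on $\mathcal G$, $\mathbb F^+$ the unital subsemigroup generated by $\mathcal G$; $2^{\mathbb F}$ is the set of subsets of $\mathbb F$ with the product topology. A subset of $\mathbb F$ is convex if it contains the shortest path between any two of its elements. $\Omega_A^\tau$ is the set of $\xi\subset\mathbb F$ with: $e\in\xi$, $\xi$ convex; if $\omega\in\xi$ there is at most one $y\in\mathcal G$ with $\omega y\in\xi$; if $\omega,\omega y\in\xi$ ($y\in\mathcal G$) then for $x\in\mathcal G$, $\omega x^{-1}\in\xi\iff A(x,y)=1$. $\xi$ is unbounded if it has no upper bound for the order $s\le t\iff s^{-1}t\in\mathbb F^+$. $\widetilde\Omega_A$ is the closure in $\Omega_A^\tau$ of the unbounded elements, $\Omega_A=\widetilde\Omega_A\setminus\{\{e\}\}$, and $\Delta_t=\{\xi\in\widetilde\Omega_A:t\in\xi\}$ for $t\in\mathbb F$. (Under the known isomorphism $\widetilde{\mathcal O}_A\cong C(\widetilde\Omega_A)\rtimes\mathbb F$, $P_i$ corresponds to $S_iS_i^*$ and $Q_i$ to $S_i^*S_i$.) $\rho_i(j)=A(i,j)$ and $\delta_i=$ indicator of $\{i\}$, as functions on $\mathcal G$; $R_A\subset\ell^\infty(\mathcal G)$ is the $C^*$-algebra generated by all $\rho_i,\delta_i$, and $\tilde R_A$ its unitization inside $\ell^\infty(\mathcal G)$. $\tilde{\mathcal G}=\mathcal G\cup\{\star\}$ is the one-point compactification of discrete $\mathcal G$; $c_j(i)=A(i,j)$; $\tilde\Gamma_A$ is the closure of $\{(j,c_j):j\in\mathcal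 G\}$ in $\tilde{\mathcal G}\times\{0,1\}^{\mathcal G}$, and $\Gamma_A=\tilde\Gamma_A\setminus\{(\star,\mathbf 0)\}$. Identifying $j$ with $(j,c_j)$, every $f\in\tilde R_A$ has a unique continuous extension $\hat f$ to $\tilde\Gamma_A$. *)

theory Defs
  imports "HOL-Analysis.Analysis"
begin

section \<open>Free group on the generating set (= the type 'g), as reduced words\<close>

text \<open>A letter (x, True) stands for the generator x, (x, False) for its inverse.\<close>
type_synonym 'g word = "('g \<times> bool) list"

definition flip_letter :: "'g \<times> bool \<Rightarrow> 'g \<times> bool" where
  "flip_letter l = (fst l, \<not> snd l)"

fun reduced :: "'g word \<Rightarrow> bool" where
  "reduced (a # b # w) = (b \<noteq> flip_letter a \<and> reduced (b # w))"
| "reduced _ = True"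

definition FG :: "'g word set" where
  "FG = {w. reduced w}"

text \<open>Push a letter on a reversed reduced word, cancelling if possible.\<close>
fun push_letter :: "'g word \<Rightarrow> 'g \<times> bool \<Rightarrow> 'g word" where
  "push_letter [] x = [x]"
| "push_letter (y # s) x = (if y = flip_letter x then s else x # y # s)"

text \<open>Group product of reduced words (free reduction of the concatenation).\<close>
definition fg_mult :: "'g word \<Rightarrow> 'g word \<Rightarrow> 'g word" where
  "fg_mult u v = rev (foldl push_letter (rev u) v)"

definition fg_inv :: "'g word \<Rightarrow> 'g word" where
  "fg_inv w = rev (map flip_letter w)"

definition fg_unit :: "'g word" where
  "fg_unit = []"

definition gen :: "'g \<Rightarrow> 'g word" where
  "gen x = [(x, True)]"

definition gen_inv :: "'g \<Rightarrow> 'g word" where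
  "gen_inv x = [(x, False)]"

definition FGplus :: "'g word set" where
  "FGplus = {w \<in> FG. list_all snd w}"

definition fg_le :: "'g word \<Rightarrow> 'g word \<Rightarrow> bool" where
  "fg_le s t = (fg_mult (fg_inv s) t \<in> FGplus)"

text \<open>Convexity: with s, t the set contains the geodesic s, s a1, s a1 a2, ..., t
  where s^{-1} t = a1 ... an is reduced.\<close>
definition convex_fg :: "'g word set \<Rightarrow> bool" where
  "convex_fg \<xi> = (\<forall>s\<in>\<xi>. \<forall>t\<in>\<xi>. \<forall>k \<le> length (fg_mult (fg_inv s) t).
       fg_mult s (take k (fg_mult (fg_inv s) t)) \<in> \<xi>)"

text \<open>The 0-1 matrix A over 'g is a relation A :: 'g \<Rightarrow> 'g \<Rightarrow> bool.\<close>
definition OmegaTau :: "('g \<Rightarrow> 'g \<Rightarrow> bool) \<Rightarrow> 'g word set set" where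
  "OmegaTau A = {\<xi>. \<xi> \<subseteq> FG \<and> fg_unit \<in> \<xi> \<and> convex_fg \<xi>
      \<and> (\<forall>\<omega>\<in>\<xi>. \<forall>y1 y2. fg_mult \<omega> (gen y1) \<in> \<xi> \<and> fg_mult \<omega> (gen y2) \<in> \<xi> \<longrightarrow> y1 = y2)
      \<and> (\<forall>\<omega>\<in>\<xi>. \<forall>y. fg_mult \<omega> (gen y) \<in> \<xi> \<longrightarrow>
            (\<forall>x. fg_mult \<omega> (gen_inv x) \<in> \<xi> \<longleftrightarrow> A x y))}"

definition fg_unbounded :: "'g word set \<Rightarrow> bool" where
  "fg_unbounded \<xi> = (\<not> (\<exists>t\<in>FG. \<forall>s\<in>\<xi>. fg_le s t))"

text \<open>Product topology on 2^X, via characteristic functions (the subspace of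
  subsets of F carries the product topology of 2^F).\<close>
definition powtop :: "'a set topology" where
  "powtop = pullback_topology UNIV (\<lambda>S x. x \<in> S) euclidean"

definition OmegaTilde :: "('g \<Rightarrow> 'g \<Rightarrow> bool) \<Rightarrow> 'g word set set" where
  "OmegaTilde A = (subtopology powtop (OmegaTau A)) closure_of {\<xi> \<in> OmegaTau A. fg_unbounded \<xi>}"

definition Omega :: "('g \<Rightarrow> 'g \<Rightarrow> bool) \<Rightarrow> 'g word set set" where
  "Omega A = OmegaTilde A - {{fg_unit}}"

definition Delta :: "('g \<Rightarrow> 'g \<Rightarrow> bool) \<Rightarrow> 'g word \<Rightarrow> 'g word set set" where
  "Delta A t = {\<xi> \<in> OmegaTilde A. t \<in> \<xi>}"

text \<open>One-point compactification of the discrete set 'g: None plays the role of \<star>.\<close>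
definition tildeG_top :: "'g option topology" where
  "tildeG_top = topology (\<lambda>U. None \<notin> U \<or> finite (- U))"

text \<open>c_j(i) = A(i,j); elements of {0,1}^G are functions 'g \<Rightarrow> bool (product topology).\<close>
definition col :: "('g \<Rightarrow> 'g \<Rightarrow> bool) \<Rightarrow> 'g \<Rightarrow> ('g \<Rightarrow> bool)" where
  "col A j = (\<lambda>i. A i j)"

definition Gamma_top :: "('g option \<times> ('g \<Rightarrow> bool)) topology" where
  "Gamma_top = prod_topology tildeG_top euclidean"

definition GammaTilde :: "('g \<Rightarrow> 'g \<Rightarrow> bool) \<Rightarrow> ('g option \<times> ('g \<Rightarrow> bool)) set" where
  "GammaTilde A = Gamma_top closure_of {(Some j, col A j) | j. True}"

definition Gamma :: "('g \<Rightarrow> 'g \<Rightarrow> bool) \<Rightarrow> ('g option \<times> ('g \<Rightarrow> bool)) set" where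
  "Gamma A = GammaTilde A - {(None, \<lambda>_. False)}"

definition sigma1 :: "'g word set \<Rightarrow> 'g option" where
  "sigma1 \<xi> = (if \<exists>x. gen x \<in> \<xi> then Some (THE x. gen x \<in> \<xi>) else None)"

definition Rxi :: "'g word set \<Rightarrow> ('g \<Rightarrow> bool)" where
  "Rxi \<xi> = (\<lambda>x. gen_inv x \<in> \<xi>)"

definition phiA :: "'g word set \<Rightarrow> 'g option \<times> ('g \<Rightarrow> bool)" where
  "phiA \<xi> = (sigma1 \<xi>, Rxi \<xi>)"

inductive_set star_alg :: "('x \<Rightarrow> complex) set \<Rightarrow> ('x \<Rightarrow> complex) set" for S where
  gen: "f \<in> S \<Longrightarrow> f \<in> star_alg S"
| zero: "(\<lambda>_. 0) \<in> star_alg S"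
| add: "f \<in> star_alg S \<Longrightarrow> g \<in> star_alg S \<Longrightarrow> (\<lambda>x. f x + g x) \<in> star_alg S"
| smult: "f \<in> star_alg S \<Longrightarrow> (\<lambda>x. c * f x) \<in> star_alg S"
| mult: "f \<in> star_alg S \<Longrightarrow> g \<in> star_alg S \<Longrightarrow> (\<lambda>x. f x * g x) \<in> star_alg S"
| conj: "f \<in> star_alg S \<Longrightarrow> (\<lambda>x. cnj (f x)) \<in> star_alg S"

definition cstar_gen :: "('x \<Rightarrow> complex) set \<Rightarrow> ('x \<Rightarrow> complex) set" where
  "cstar_gen S = {f. \<forall>\<epsilon>>0. \<exists>g\<in>star_alg S. \<forall>x. cmod (f x - g x) \<le> \<epsilon>}"

definition rho :: "('g \<Rightarrow> 'g \<Rightarrow> bool) \<Rightarrow> 'g \<Rightarrow> 'g \<Rightarrow> complex" where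
  "rho A i = (\<lambda>j. if A i j then 1 else 0)"

definition delta :: "'g \<Rightarrow> 'g \<Rightarrow> complex" where
  "delta i = (\<lambda>j. if j = i then 1 else 0)"

definition RA :: "('g \<Rightarrow> 'g \<Rightarrow> bool) \<Rightarrow> ('g \<Rightarrow> complex) set" where
  "RA A = cstar_gen ({rho A i | i. True} \<union> {delta i | i. True})"

text \<open>Unitization inside l^\<infinity>(G): R_A + C 1.\<close>
definition RAtilde :: "('g \<Rightarrow> 'g \<Rightarrow> bool) \<Rightarrow> ('g \<Rightarrow> complex) set" where
  "RAtilde A = cstar_gen ({\<lambda>_. 1} \<union> {rho A i | i. True} \<union> {delta i | i. True})"

text \<open>The unique continuous extension of f to GammaTilde (set to 0 off GammaTilde).\<close>
definition hat :: "('g \<Rightarrow> 'g \<Rightarrow> bool) \<Rightarrow> ('g \<Rightarrow> complex) \<Rightarrow> ('g option \<times> ('g \<Rightarrow> bool) \<Rightarrow> complex)" where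
  "hat A f = (THE h. continuous_map (subtopology Gamma_top (GammaTilde A)) euclidean h
                   \<and> (\<forall>j. h (Some j, col A j) = f j)
                   \<and> (\<forall>p. p \<notin> GammaTilde A \<longrightarrow> h p = 0))"

text \<open>Elements of C(OmegaTilde) are represented as functions vanishing off OmegaTilde.\<close>
definition psiA :: "('g \<Rightarrow> 'g \<Rightarrow> bool) \<Rightarrow> ('g \<Rightarrow> complex) \<Rightarrow> 'g word set \<Rightarrow> complex" where
  "psiA A f = (\<lambda>\<xi>. if \<xi> \<in> OmegaTilde A then hat A f (phiA \<xi>) else 0)"

definition charfun :: "'a set \<Rightarrow> 'a \<Rightarrow> complex" where
  "charfun S = (\<lambda>x. if x \<in> S then 1 else 0)"

definition PA :: "('g \<Rightarrow> 'g \<Rightarrow> bool) \<Rightarrow> 'g \<Rightarrow> 'g word set \<Rightarrow> complex" where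
  "PA A i = charfun (Delta A (gen i))"

definition QA :: "('g \<Rightarrow> 'g \<Rightarrow> bool) \<Rightarrow> 'g \<Rightarrow> 'g word set \<Rightarrow> complex" where
  "QA A i = charfun (Delta A (gen_inv i))"

end

theory Submission
  imports Defs
begin

lemma flip_flip[simp]: "flip_letter (flip_letter a) = a"
  by (cases a) (simp add: flip_letter_def)

lemma flip_neq[simp]: "flip_letter a \<noteq> a"
  by (cases a) (simp add: flip_letter_def)

lemma flip_eq_iff: "flip_letter a = b \<longleftrightarrow> a = flip_letter b"
  by auto

lemma reduced_Cons: "reduced (a # w) \<longleftrightarrow> reduced w \<and> (w = [] \<or> hd w \<noteq> flip_letter a)"
  by (cases w) auto

lemma reduced_append: "reduced (u @ v) \<longleftrightarrow> reduced u \<and> reduced v \<and> (u = [] \<or> v = [] \<or> hd v \<noteq> flip_letter (last u))"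
  by (induction u) (auto simp: reduced_Cons)

lemma reduced_take: "reduced w \<Longrightarrow> reduced (take k w)"
  by (metis append_take_drop_id reduced_append)

lemma reduced_drop: "reduced w \<Longrightarrow> reduced (drop k w)"
  by (metis append_take_drop_id reduced_append)

lemma reduced_snoc: "reduced (u @ [a]) \<longleftrightarrow> reduced u \<and> (u = [] \<or> last u \<noteq> flip_letter a)"
  by (auto simp: reduced_append flip_eq_iff)

lemma fg_inv_append: "fg_inv (u @ v) = fg_inv v @ fg_inv u"
  by (simp add: fg_inv_def)

lemma fg_inv_inv[simp]: "fg_inv (fg_inv u) = u"
  by (simp add: fg_inv_def rev_map comp_def)

lemma fg_inv_Nil[simp]: "fg_inv [] = []" by (simp add: fg_inv_def)

lemma length_fg_inv[simp]: "length (fg_inv u) = length u" by (simp add: fg_inv_def)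

lemma reduced_rev_flip: "reduced w \<Longrightarrow> reduced (fg_inv w)"
proof (induction w)
  case Nil then show ?case by simp
next
  case (Cons a w)
  then have "reduced w" "w = [] \<or> hd w \<noteq> flip_letter a" by (auto simp: reduced_Cons)
  then show ?case using Cons.IH
    by (auto simp: fg_inv_def reduced_snoc last_rev last_map hd_map flip_eq_iff)
qed

lemma foldl_push_cancel: "foldl push_letter (map flip_letter c @ r) c = r"
  by (induction c) auto

lemma fg_mult_cancel: "fg_mult (u @ fg_inv c) (c @ v) = fg_mult u v"
  by (simp add: fg_mult_def fg_inv_def rev_map foldl_push_cancel)

lemma fg_mult_Nil2[simp]: "fg_mult u [] = u"
  by (simp add: fg_mult_def)

lemma foldl_push_nocancel: "reduced (u @ v) \<Longrightarrow> foldl push_letter (rev u) v = rev v @ rev u"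
proof (induction v arbitrary: u)
  case Nil then show ?case by simp
next
  case (Cons a v)
  have r: "reduced ((u @ [a]) @ v)" using Cons.prems by simp
  have "push_letter (rev u) a = a # rev u"
  proof (cases u rule: rev_cases)
    case Nil then show ?thesis by simp
  next
    case (snoc u' b)
    then have "a \<noteq> flip_letter b" using Cons.prems by (auto simp: reduced_append)
    then show ?thesis using snoc by (auto simp: flip_eq_iff)
  qed
  then show ?case using Cons.IH[OF r] by simp
qed

lemma fg_mult_nocancel: "reduced (u @ v) \<Longrightarrow> fg_mult u v = u @ v"
  by (simp add: fg_mult_def foldl_push_nocancel)

lemma fg_mult_Nil1: "reduced v \<Longrightarrow> fg_mult [] v = v"
  by (simp add: fg_mult_nocancel)

lemma fg_mult_single: "fg_mult u [a] = (if u \<noteq> [] \<and> last u = flip_letter a then butlast u else u @ [a])"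
proof (cases u rule: rev_cases)
  case Nil then show ?thesis by (simp add: fg_mult_def)
next
  case (snoc u' b) then show ?thesis by (simp add: fg_mult_def)
qed

lemma common_prefix: "\<exists>c s1 t1. s = c @ s1 \<and> t = c @ t1 \<and> (s1 = [] \<or> t1 = [] \<or> hd s1 \<noteq> hd t1)"
proof (induction s arbitrary: t)
  case Nil then show ?case by auto
next
  case (Cons a s)
  show ?case
  proof (cases t)
    case Nil then show ?thesis by (intro exI[of _ "[]"] exI[of _ "a#s"] exI[of _ "[]"]) auto
  next
    case (Cons b t')
    show ?thesis
    proof (cases "a = b")
      case True
      obtain c s1 t1 where "s = c @ s1" "t' = c @ t1" "s1 = [] \<or> t1 = [] \<or> hd s1 \<noteq> hd t1"
        using Cons.IH by blast
      then show ?thesis using Cons True by (intro exI[of _ "a # c"] exI[of _ s1] exI[of _ t1]) auto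
    next
      case False then show ?thesis using Cons by (intro exI[of _ "[]"] exI[of _ "a#s"] exI[of _ "t"]) auto
    qed
  qed
qed

lemma inv_mult_decomp:
  assumes rs: "reduced s" and rt: "reduced t" and st: "s = c @ s1" "t = c @ t1"
    and d: "s1 = [] \<or> t1 = [] \<or> hd s1 \<noteq> hd t1"
  shows "fg_mult (fg_inv s) t = fg_inv s1 @ t1"
proof -
  have rs1: "reduced s1" and rt1: "reduced t1" using rs rt st reduced_append by blast+
  have red: "reduced (fg_inv s1 @ t1)"
  proof -
    have "s1 \<noteq> [] \<Longrightarrow> last (fg_inv s1) = flip_letter (hd s1)"
      by (simp add: fg_inv_def last_rev last_map hd_map)
    then show ?thesis using d rs1 rt1 reduced_rev_flip[OF rs1]
      by (cases "s1 = []") (auto simp: reduced_append)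
  qed
  show ?thesis
    using st fg_mult_cancel[of "fg_inv s1" c t1] fg_mult_nocancel[OF red]
    by (simp add: fg_inv_append)
qed

definition prefix_closed :: "'g word set \<Rightarrow> bool" where
  "prefix_closed X = (\<forall>w\<in>X. \<forall>k. take k w \<in> X)"

lemma convex_imp_prefix:
  assumes "X \<subseteq> FG" "[] \<in> X" "convex_fg X" shows "prefix_closed X"
  unfolding prefix_closed_def
proof (intro ballI allI)
  fix w k assume w: "w \<in> X"
  then have rw: "reduced w" using assms(1) by (auto simp: FG_def)
  show "take k w \<in> X"
  proof (cases "k \<le> length w")
    case True
    have "fg_mult (fg_inv []) w = w" using rw by (simp add: fg_mult_Nil1)
    then have "fg_mult [] (take k w) \<in> X" using assms(3) w assms(2) True
      unfolding convex_fg_def by (metis fg_inv_Nil)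
    then show ?thesis using reduced_take[OF rw] by (simp add: fg_mult_Nil1)
  next
    case False then show ?thesis using w by simp
  qed
qed

lemma prefix_imp_convex:
  assumes "X \<subseteq> FG" "prefix_closed X" shows "convex_fg X"
  unfolding convex_fg_def
proof (intro ballI allI impI)
  fix s t k assume s: "s \<in> X" and t: "t \<in> X" and k: "k \<le> length (fg_mult (fg_inv s) t)"
  have rs: "reduced s" and rt: "reduced t" using s t assms(1) by (auto simp: FG_def)
  obtain c s1 t1 where st: "s = c @ s1" "t = c @ t1" and d: "s1 = [] \<or> t1 = [] \<or> hd s1 \<noteq> hd t1"
    using common_prefix by blast
  have rs1: "reduced s1" and rt1: "reduced t1" using rs rt st reduced_append by blast+
  have red: "reduced (fg_inv s1 @ t1)"
  proof -
    have "s1 \<noteq> [] \<Longrightarrow> last (fg_inv s1) = flip_letter (hd s1)"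
      by (simp add: fg_inv_def last_rev last_map hd_map)
    then show ?thesis using d rs1 rt1 reduced_rev_flip[OF rs1]
      by (cases "s1 = []") (auto simp: reduced_append)
  qed
  have m: "fg_mult (fg_inv s) t = fg_inv s1 @ t1"
    using inv_mult_decomp rs rt st d by blast
  show "fg_mult s (take k (fg_mult (fg_inv s) t)) \<in> X"
  proof (cases "k \<le> length s1")
    case True
    obtain a b where ab: "s1 = a @ b" "length b = k"
      using True by (metis append_take_drop_id diff_diff_cancel length_drop)
    have "take k (fg_inv s1 @ t1) = fg_inv b"
      using ab by (simp add: fg_inv_append)
    moreover have "fg_mult ((c @ a) @ fg_inv (fg_inv b)) (fg_inv b @ []) = c @ a"
      by (metis fg_mult_Nil2 fg_mult_cancel)
    ultimately have "fg_mult s (take k (fg_mult (fg_inv s) t)) = take (length c + length a) s"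
      using m st ab by simp
    then show ?thesis using s assms(2) by (simp add: prefix_closed_def)
  next
    case False
    have "take k (fg_inv s1 @ t1) = fg_inv s1 @ take (k - length s1) t1"
      using False by simp
    moreover have "fg_mult (c @ fg_inv (fg_inv s1)) (fg_inv s1 @ take (k - length s1) t1)
        = c @ take (k - length s1) t1"
      using fg_mult_cancel fg_mult_nocancel reduced_take[OF rt, of "length c + (k - length s1)"] st
      by (metis take_append take_all_iff diff_add_inverse le_add1 linorder_not_le order_refl)
    ultimately have "fg_mult s (take k (fg_mult (fg_inv s) t)) = take (length c + (k - length s1)) t"
      using m st by simp
    then show ?thesis using t assms(2) by (simp add: prefix_closed_def)
  qed
qed


lemma OT_D:
  "\<xi> \<in> OmegaTau A \<Longrightarrow> \<xi> \<subseteq> FG \<and> fg_unit \<in> \<xi> \<and> convex_fg \<xi>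
      \<and> (\<forall>\<omega>\<in>\<xi>. \<forall>y1 y2. fg_mult \<omega> (gen y1) \<in> \<xi> \<and> fg_mult \<omega> (gen y2) \<in> \<xi> \<longrightarrow> y1 = y2)
      \<and> (\<forall>\<omega>\<in>\<xi>. \<forall>y. fg_mult \<omega> (gen y) \<in> \<xi> \<longrightarrow>
            (\<forall>x. fg_mult \<omega> (gen_inv x) \<in> \<xi> \<longleftrightarrow> A x y))"
  by (unfold OmegaTau_def mem_Collect_eq) assumption

lemma OT_sub: "\<xi> \<in> OmegaTau A \<Longrightarrow> \<xi> \<subseteq> FG"
  by (drule OT_D) (erule conjunct1)
lemma OT_e: "\<xi> \<in> OmegaTau A \<Longrightarrow> [] \<in> \<xi>"
  by (drule OT_D) (simp add: fg_unit_def)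
lemma OT_cv: "\<xi> \<in> OmegaTau A \<Longrightarrow> convex_fg \<xi>"
  by (drule OT_D) (elim conjE)
lemma OT_pc: "\<xi> \<in> OmegaTau A \<Longrightarrow> prefix_closed \<xi>"
  using convex_imp_prefix OT_cv OT_sub OT_e by metis
lemma OT_uniq: "\<xi> \<in> OmegaTau A \<Longrightarrow> \<omega> \<in> \<xi> \<Longrightarrow> fg_mult \<omega> (gen y1) \<in> \<xi> \<Longrightarrow> fg_mult \<omega> (gen y2) \<in> \<xi> \<Longrightarrow> y1 = y2"
  by (drule OT_D) (elim conjE, blast)
lemma OT_A: "\<xi> \<in> OmegaTau A \<Longrightarrow> \<omega> \<in> \<xi> \<Longrightarrow> fg_mult \<omega> (gen y) \<in> \<xi> \<Longrightarrow> fg_mult \<omega> (gen_inv x) \<in> \<xi> \<longleftrightarrow> A x y"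
  by (drule OT_D) (elim conjE, blast)

lemma OT_pre: "\<xi> \<in> OmegaTau A \<Longrightarrow> w \<in> \<xi> \<Longrightarrow> take k w \<in> \<xi>"
  using OT_pc prefix_closed_def by blast

lemma gen_mem_phi:
  assumes "\<xi> \<in> OmegaTau A" "gen x \<in> \<xi>"
  shows "phiA \<xi> = (Some x, col A x)" "sigma1 \<xi> = Some x"
proof -
  have g: "fg_mult [] (gen y) = gen y" for y by (simp add: fg_mult_def gen_def)
  have gi: "fg_mult [] (gen_inv y) = gen_inv y" for y by (simp add: fg_mult_def gen_inv_def)
  have u: "gen y \<in> \<xi> \<Longrightarrow> y = x" for y
    using OT_uniq[OF assms(1) OT_e[OF assms(1)], of y x] assms(2) g by metis
  then have "(THE y. gen y \<in> \<xi>) = x" using assms(2) by blast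
  then show s: "sigma1 \<xi> = Some x" using assms(2) by (auto simp: sigma1_def)
  have "gen_inv z \<in> \<xi> \<longleftrightarrow> A z x" for z
    using OT_A[OF assms(1) OT_e[OF assms(1)], of x z] assms(2) g gi by metis
  then have "Rxi \<xi> = col A x"
    by (auto simp: Rxi_def col_def)
  then show "phiA \<xi> = (Some x, col A x)" using s by (simp add: phiA_def)
qed

lemma sigma1_None: "\<forall>x. gen x \<notin> \<xi> \<Longrightarrow> sigma1 \<xi> = None"
  by (simp add: sigma1_def)

lemma last_take_nth: "k < length w \<Longrightarrow> last (take (Suc k) w) = w ! k"
  by (simp add: take_Suc_conv_app_nth)

lemma reduced_nth: "reduced w \<Longrightarrow> Suc k < length w \<Longrightarrow> w ! Suc k \<noteq> flip_letter (w ! k)"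
proof -
  assume r: "reduced w" and k: "Suc k < length w"
  have "reduced (take (Suc k) w @ drop (Suc k) w)" using r by simp
  moreover have "hd (drop (Suc k) w) = w ! Suc k" using k by (simp add: hd_drop_conv_nth)
  moreover have "last (take (Suc k) w) = w ! k" using k by (simp add: last_take_nth)
  moreover have "take (Suc k) w \<noteq> []" "drop (Suc k) w \<noteq> []" using k by auto
  ultimately show ?thesis using k unfolding reduced_append by metis
qed

lemma nogen_neg:
  assumes X: "\<xi> \<in> OmegaTau A" and ng: "\<forall>x. gen x \<notin> \<xi>" and w: "w \<in> \<xi>"
  shows "list_all (\<lambda>l. \<not> snd l) w"
proof -
  have rw: "reduced w" using OT_sub[OF X] w by (auto simp: FG_def)
  have "k \<le> length w \<Longrightarrow> list_all (\<lambda>l. \<not> snd l) (take k w)" for k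
  proof (induction k)
    case 0 then show ?case by simp
  next
    case (Suc k)
    then have IH: "list_all (\<lambda>l. \<not> snd l) (take k w)" and kl: "k < length w" by auto
    have ts: "take (Suc k) w = take k w @ [w ! k]" using kl by (simp add: take_Suc_conv_app_nth)
    have "\<not> snd (w ! k)"
    proof
      assume sn: "snd (w ! k)"
      obtain y where y: "w ! k = (y, True)" using sn by (metis prod.collapse)
      show False
      proof (cases k)
        case 0
        then have "take (Suc k) w = gen y" using ts y by (simp add: gen_def)
        then show False using OT_pre[OF X w] ng by metis
      next
        case (Suc k')
        let ?u = "take k w"
        have lu: "last ?u = w ! k'" using Suc kl by (simp add: last_take_nth)
        have "\<not> snd (w ! k')" using IH Suc kl by (auto simp: list_all_length)
        then obtain x where x: "w ! k' = (x, False)" by (metis prod.collapse)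
        have "w ! k \<noteq> flip_letter (w ! k')" using reduced_nth[OF rw, of k'] Suc kl by simp
        then have xy: "x \<noteq> y" using x y by (auto simp: flip_letter_def)
        have u0: "?u \<noteq> []" using Suc kl by (cases w) auto
        have m1: "fg_mult ?u (gen y) = take (Suc k) w"
          using ts y lu x xy u0 by (simp add: gen_def fg_mult_single flip_letter_def)
        have m2: "fg_mult ?u (gen x) = take k' w"
          using lu x u0 Suc kl by (simp add: gen_def fg_mult_single flip_letter_def butlast_take)
        have "x = y" using OT_uniq[OF X OT_pre[OF X w, of k], of x y] m1 m2 OT_pre[OF X w] by metis
        then show False using xy by simp
      qed
    qed
    then show ?case using IH ts by simp
  qed
  from this[of "length w"] show ?thesis by simp
qed

lemma unbounded_gen:
  assumes X: "\<xi> \<in> OmegaTau A" and ub: "fg_unbounded \<xi>"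
  shows "\<exists>x. gen x \<in> \<xi>"
proof (rule ccontr)
  assume "\<not> (\<exists>x. gen x \<in> \<xi>)"
  then have ng: "\<forall>x. gen x \<notin> \<xi>" by blast
  have "fg_le s []" if s: "s \<in> \<xi>" for s
  proof -
    have rs: "reduced s" using OT_sub[OF X] s by (auto simp: FG_def)
    have "list_all (\<lambda>l. \<not> snd l) s" using nogen_neg[OF X ng s] .
    then have "list_all snd (fg_inv s)"
      by (simp add: fg_inv_def list_all_iff flip_letter_def)
    then show ?thesis using reduced_rev_flip[OF rs]
      by (simp add: fg_le_def FGplus_def FG_def)
  qed
  moreover have "[] \<in> FG" by (simp add: FG_def)
  ultimately show False using ub unfolding fg_unbounded_def by blast
qed

lemma phi_zero:
  assumes X: "\<xi> \<in> OmegaTau A" and p: "phiA \<xi> = (None, \<lambda>_. False)"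
  shows "\<xi> = {[]}"
proof -
  have ng: "\<forall>x. gen x \<notin> \<xi>" using p by (auto simp: phiA_def sigma1_def split: if_splits)
  have ngi: "\<forall>x. gen_inv x \<notin> \<xi>" using p by (auto simp: phiA_def Rxi_def dest: fun_cong)
  have "w = []" if w: "w \<in> \<xi>" for w
  proof (rule ccontr)
    assume "w \<noteq> []"
    then obtain a w' where "w = a # w'" by (cases w) auto
    then have "take 1 w = [a]" by simp
    then have "[a] \<in> \<xi>" using OT_pre[OF X w, of 1] by simp
    then show False using ng ngi by (cases a) (metis (full_types) gen_def gen_inv_def)
  qed
  then show ?thesis using OT_e[OF X] by blast
qed

lemma phi_e: "phiA {[]} = (None, \<lambda>_. False)"
  by (auto simp: phiA_def sigma1_def Rxi_def gen_def gen_inv_def)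


definition spine :: "('g \<Rightarrow> 'g) \<Rightarrow> 'g \<Rightarrow> nat \<Rightarrow> 'g" where
  "spine nx j n = (nx ^^ n) j"

definition Pw :: "('g \<Rightarrow> 'g) \<Rightarrow> 'g \<Rightarrow> nat \<Rightarrow> 'g word" where
  "Pw nx j n = map (\<lambda>k. (spine nx j k, True)) [0..<n]"

definition negw :: "'g list \<Rightarrow> 'g word" where
  "negw xs = map (\<lambda>x. (x, False)) xs"

fun chainA :: "('g \<Rightarrow> 'g \<Rightarrow> bool) \<Rightarrow> 'g \<Rightarrow> 'g list \<Rightarrow> bool" where
  "chainA A y [] = True"
| "chainA A y (x # xs) = (A x y \<and> chainA A x xs)"

definition Xi :: "('g \<Rightarrow> 'g \<Rightarrow> bool) \<Rightarrow> ('g \<Rightarrow> 'g) \<Rightarrow> 'g \<Rightarrow> 'g word set" where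
  "Xi A nx j = {Pw nx j n @ negw xs | n xs. chainA A (spine nx j n) xs
      \<and> (n = 0 \<or> xs = [] \<or> hd xs \<noteq> spine nx j (n - 1))}"

lemma spine_Suc: "spine nx j (Suc n) = nx (spine nx j n)"
  by (simp add: spine_def)

lemma Pw_Suc: "Pw nx j (Suc n) = Pw nx j n @ [(spine nx j n, True)]"
  by (simp add: Pw_def)

lemma length_Pw[simp]: "length (Pw nx j n) = n" by (simp add: Pw_def)

lemma Pw_Nil[simp]: "Pw nx j n = [] \<longleftrightarrow> n = 0" by (simp add: Pw_def)

lemma take_Pw: "k \<le> n \<Longrightarrow> take k (Pw nx j n) = Pw nx j k"
  by (simp add: Pw_def take_map)

lemma Pw_pos: "list_all snd (Pw nx j n)" by (simp add: Pw_def list_all_iff)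

lemma negw_neg: "list_all (\<lambda>l. \<not> snd l) (negw xs)" by (simp add: negw_def list_all_iff)

lemma filter_snd: "filter snd (Pw nx j n @ negw xs) = Pw nx j n"
  using Pw_pos[of nx j n] negw_neg[of xs]
  by (simp add: list_all_iff filter_id_conv)

lemma rep_unique:
  assumes "Pw nx j n @ negw xs = Pw nx j m @ negw ys" shows "n = m" "xs = ys"
proof -
  have "Pw nx j n = Pw nx j m" using filter_snd assms by metis
  then show nm: "n = m" by (metis length_Pw)
  then have "negw xs = negw ys" using assms by simp
  then show "xs = ys" by (simp add: negw_def inj_map_eq_map inj_on_def)
qed

lemma reduced_pos: "list_all snd w \<Longrightarrow> reduced w"
  by (induction w) (auto simp: reduced_Cons flip_letter_def neq_Nil_conv)

lemma reduced_neg: "list_all (\<lambda>l. \<not> snd l) w \<Longrightarrow> reduced w"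
  by (induction w) (auto simp: reduced_Cons flip_letter_def neq_Nil_conv)

lemma chainA_take: "chainA A y xs \<Longrightarrow> chainA A y (take m xs)"
  by (induction xs arbitrary: y m) (auto simp: take_Cons split: nat.splits)

lemma chainA_snoc: "chainA A y (xs @ [x]) \<longleftrightarrow> chainA A y xs \<and> A x (last (y # xs))"
  by (induction xs arbitrary: y) auto

lemma last_Pw: "n > 0 \<Longrightarrow> last (Pw nx j n) = (spine nx j (n - 1), True)"
  by (cases n) (auto simp: Pw_Suc)

context
  fixes A :: "'g \<Rightarrow> 'g \<Rightarrow> bool" and nx :: "'g \<Rightarrow> 'g" and j :: 'g
  assumes nxA: "\<forall>i. A i (nx i)"
begin

lemma Xi_mem: "w \<in> Xi A nx j \<longleftrightarrow> (\<exists>n xs. w = Pw nx j n @ negw xs \<and> chainA A (spine nx j n) xs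
      \<and> (n = 0 \<or> xs = [] \<or> hd xs \<noteq> spine nx j (n - 1)))"
  by (simp add: Xi_def)

lemma Xi_mem_rep: "Pw nx j n @ negw xs \<in> Xi A nx j \<longleftrightarrow> chainA A (spine nx j n) xs
      \<and> (n = 0 \<or> xs = [] \<or> hd xs \<noteq> spine nx j (n - 1))"
  unfolding Xi_mem using rep_unique by metis

lemma Pw_in: "Pw nx j n \<in> Xi A nx j"
  using Xi_mem_rep[of n "[]"] by (simp add: negw_def)

lemma Xi_FG: "Xi A nx j \<subseteq> FG"
proof
  fix w assume "w \<in> Xi A nx j"
  then obtain n xs where w: "w = Pw nx j n @ negw xs" and h: "n = 0 \<or> xs = [] \<or> hd xs \<noteq> spine nx j (n - 1)"
    unfolding Xi_mem by blast
  have "n > 0 \<Longrightarrow> xs \<noteq> [] \<Longrightarrow> hd (negw xs) \<noteq> flip_letter (last (Pw nx j n))"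
    using h by (auto simp: last_Pw negw_def flip_letter_def hd_map)
  then show "w \<in> FG" unfolding FG_def using reduced_pos[OF Pw_pos] reduced_neg[OF negw_neg] w
    by (auto simp: reduced_append negw_def)
qed

lemma Xi_pc: "prefix_closed (Xi A nx j)"
  unfolding prefix_closed_def
proof (intro ballI allI)
  fix w k assume "w \<in> Xi A nx j"
  then obtain n xs where w: "w = Pw nx j n @ negw xs" and c: "chainA A (spine nx j n) xs"
    and h: "n = 0 \<or> xs = [] \<or> hd xs \<noteq> spine nx j (n - 1)"
    unfolding Xi_mem by blast
  show "take k w \<in> Xi A nx j"
  proof (cases "k \<le> n")
    case True then show ?thesis using w Pw_in by (simp add: take_Pw[OF True])
  next
    case False
    have "take k w = Pw nx j n @ negw (take (k - n) xs)"
      using w False by (simp add: negw_def take_map)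
    moreover have "take (k - n) xs = [] \<or> hd (take (k - n) xs) = hd xs"
      by (cases xs; cases "k - n") auto
    moreover have "chainA A (spine nx j n) (take (k - n) xs)" using chainA_take[OF c] .
    ultimately show ?thesis using Xi_mem_rep[of n "take (k - n) xs"] h by auto
  qed
qed

lemma Xi_e: "[] \<in> Xi A nx j"
  using Pw_in[of 0] by (simp add: Pw_def)

lemma pos_ext:
  assumes "w \<in> Xi A nx j" "w @ [(y, True)] \<in> Xi A nx j"
  shows "\<exists>n. w = Pw nx j n \<and> y = spine nx j n"
proof -
  obtain m ys where r: "w @ [(y, True)] = Pw nx j m @ negw ys"
    using assms(2) unfolding Xi_mem by blast
  have "ys = []"
  proof (rule ccontr)
    assume "ys \<noteq> []"
    then have "last (Pw nx j m @ negw ys) = (last ys, False)" by (simp add: negw_def last_map)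
    then have "(y, True) = (last ys, False)" using r by (metis last_snoc)
    then show False by simp
  qed
  then have r2: "w @ [(y, True)] = Pw nx j m" using r by (simp add: negw_def)
  then have "m > 0" by (metis length_Pw length_append_singleton zero_less_Suc)
  then obtain n where "m = Suc n" by (cases m) auto
  then show ?thesis using r2 by (auto simp: Pw_Suc)
qed

lemma Xi_succ:
  assumes w: "w \<in> Xi A nx j" and wy: "fg_mult w (gen y) \<in> Xi A nx j"
  shows "(\<exists>n. w = Pw nx j n \<and> y = spine nx j n) \<or>
         (\<exists>n xs. w = Pw nx j n @ negw xs \<and> xs \<noteq> [] \<and> y = last xs)"
proof -
  obtain n xs where wr: "w = Pw nx j n @ negw xs" using w unfolding Xi_mem by blast
  show ?thesis
  proof (cases "w \<noteq> [] \<and> last w = (y, False)")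
    case True
    then have "xs \<noteq> []" using wr last_Pw[of n nx j]
      by (cases "xs = []"; cases "n = 0") (auto simp: negw_def Pw_def)
    moreover have "last w = (last xs, False)" using wr \<open>xs \<noteq> []\<close> by (simp add: negw_def last_map)
    ultimately show ?thesis using True wr by auto
  next
    case False
    then have "fg_mult w (gen y) = w @ [(y, True)]"
      by (auto simp: fg_mult_single gen_def flip_letter_def)
    then show ?thesis using pos_ext w wy by auto
  qed
qed

lemma Xi_uniq:
  assumes w: "w \<in> Xi A nx j" and "fg_mult w (gen y1) \<in> Xi A nx j" "fg_mult w (gen y2) \<in> Xi A nx j"
  shows "y1 = y2"
proof -
  have *: "(\<exists>n. w = Pw nx j n \<and> y = spine nx j n) \<or>
         (\<exists>n xs. w = Pw nx j n @ negw xs \<and> xs \<noteq> [] \<and> y = last xs)" if "fg_mult w (gen y) \<in> Xi A nx j" for y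
    using Xi_succ[OF w that] .
  have e: "Pw nx j n = Pw nx j m @ negw xs \<Longrightarrow> xs = [] \<and> n = m" for n m xs
    using rep_unique[of nx j n "[]" m xs] by (simp add: negw_def)
  have e2: "Pw nx j n @ negw xs = Pw nx j m @ negw ys \<Longrightarrow> xs = ys" for n m xs ys
    using rep_unique by metis
  show ?thesis using *[OF assms(2)] *[OF assms(3)]
  proof (elim disjE exE conjE)
    fix n m assume "w = Pw nx j n" "y1 = spine nx j n" "w = Pw nx j m" "y2 = spine nx j m"
    then show ?thesis by (metis length_Pw)
  next
    fix n m xs assume "w = Pw nx j n" "w = Pw nx j m @ negw xs" "xs \<noteq> []"
    then show ?thesis using e by metis
  next
    fix n m xs assume "w = Pw nx j n" "w = Pw nx j m @ negw xs" "xs \<noteq> []"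
    then show ?thesis using e by metis
  next
    fix n m xs ys assume "w = Pw nx j n @ negw xs" "y1 = last xs" "w = Pw nx j m @ negw ys" "y2 = last ys"
    then show ?thesis using e2 by metis
  qed
qed

lemma Xi_Acond:
  assumes w: "w \<in> Xi A nx j" and wy: "fg_mult w (gen y) \<in> Xi A nx j"
  shows "fg_mult w (gen_inv x) \<in> Xi A nx j \<longleftrightarrow> A x y"
  using Xi_succ[OF w wy]
proof (elim disjE exE conjE)
  fix n assume wn: "w = Pw nx j n" and yn: "y = spine nx j n"
  show ?thesis
  proof (cases "n > 0 \<and> x = spine nx j (n - 1)")
    case True
    then obtain m where m: "n = Suc m" by (cases n) auto
    have "fg_mult w (gen_inv x) = Pw nx j m"
      using wn True m by (simp add: fg_mult_single gen_inv_def Pw_Suc flip_letter_def)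
    moreover have "A x y" using True m yn nxA by (simp add: spine_Suc)
    ultimately show ?thesis using Pw_in by simp
  next
    case False
    have "fg_mult w (gen_inv x) = Pw nx j n @ negw [x]"
      using wn False last_Pw[of n nx j]
      by (auto simp: fg_mult_single gen_inv_def flip_letter_def negw_def)
    then show ?thesis using Xi_mem_rep[of n "[x]"] False yn by auto
  qed
next
  fix n xs assume wr: "w = Pw nx j n @ negw xs" and xs: "xs \<noteq> []" and yl: "y = last xs"
  have lw: "last w = (last xs, False)" using wr xs by (simp add: negw_def last_map)
  have "fg_mult w (gen_inv x) = Pw nx j n @ negw (xs @ [x])"
    using lw wr xs by (auto simp: fg_mult_single gen_inv_def flip_letter_def negw_def)
  moreover obtain c: "chainA A (spine nx j n) xs" and h: "n = 0 \<or> hd xs \<noteq> spine nx j (n - 1)"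
    using w wr xs Xi_mem_rep by blast
  ultimately show ?thesis using Xi_mem_rep[of n "xs @ [x]"] xs yl chainA_snoc[of A _ xs x]
    by (auto simp: last_ConsR)
qed

lemma Xi_OT: "Xi A nx j \<in> OmegaTau A"
  unfolding OmegaTau_def fg_unit_def mem_Collect_eq
proof (intro conjI ballI allI impI)
  show "Xi A nx j \<subseteq> FG" by (rule Xi_FG)
  show "[] \<in> Xi A nx j" by (rule Xi_e)
  show "convex_fg (Xi A nx j)" by (rule prefix_imp_convex[OF Xi_FG Xi_pc])
  fix \<omega> y1 y2 assume "\<omega> \<in> Xi A nx j" "fg_mult \<omega> (gen y1) \<in> Xi A nx j \<and> fg_mult \<omega> (gen y2) \<in> Xi A nx j"
  then show "y1 = y2" using Xi_uniq by blast
next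
  fix \<omega> y x assume "\<omega> \<in> Xi A nx j" "fg_mult \<omega> (gen y) \<in> Xi A nx j"
  then show "fg_mult \<omega> (gen_inv x) \<in> Xi A nx j \<longleftrightarrow> A x y" using Xi_Acond by blast
qed

lemma Xi_unbounded: "fg_unbounded (Xi A nx j)"
  unfolding fg_unbounded_def
proof
  assume "\<exists>t\<in>FG. \<forall>s\<in>Xi A nx j. fg_le s t"
  then obtain t where t: "t \<in> FG" and b: "\<forall>s\<in>Xi A nx j. fg_le s t" by blast
  let ?s = "Pw nx j (Suc (length t))"
  have le: "fg_le ?s t" using b Pw_in[of "Suc (length t)"] by (rule bspec)
  obtain c s1 t1 where st: "?s = c @ s1" "t = c @ t1" and d: "s1 = [] \<or> t1 = [] \<or> hd s1 \<noteq> hd t1"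
    using common_prefix by blast
  have rs: "reduced ?s" using Xi_FG Pw_in by (auto simp: FG_def)
  have rt: "reduced t" using t by (simp add: FG_def)
  have m: "fg_mult (fg_inv ?s) t = fg_inv s1 @ t1" using inv_mult_decomp[OF rs rt st d] .
  have "length c \<le> length t" using st by simp
  have "s1 \<noteq> []"
  proof
    assume "s1 = []"
    then have "length ?s = length c" using st by simp
    then show False using \<open>length c \<le> length t\<close> by simp
  qed
  moreover have "list_all snd s1" using Pw_pos[of nx j "Suc (length t)"] st(1)
    by (metis list_all_append)
  ultimately have "\<not> list_all snd (fg_inv s1)"
    by (cases s1 rule: rev_cases) (auto simp: fg_inv_def flip_letter_def)
  then show False using le m by (simp add: fg_le_def FGplus_def)
qed

lemma Xi_phi: "phiA (Xi A nx j) = (Some j, col A j)"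
proof -
  have "Pw nx j 1 = gen j" by (simp add: Pw_def gen_def spine_def)
  then have "gen j \<in> Xi A nx j" using Pw_in[of 1] by simp
  then show ?thesis by (rule gen_mem_phi(1)[OF Xi_OT])
qed

end

lemma exists_Xi:
  assumes "\<forall>i. \<exists>j. A i j"
  shows "\<exists>\<xi>. \<xi> \<in> OmegaTau A \<and> fg_unbounded \<xi> \<and> phiA \<xi> = (Some j, col A j)"
proof -
  obtain nx where nx: "\<forall>i. A i (nx i)" using assms by (rule choice[THEN exE])
  show ?thesis using Xi_OT[of A nx j, OF nx] Xi_unbounded[of A nx j, OF nx] Xi_phi[of A nx j, OF nx] by blast
qed


lemma topspace_powtop[simp]: "topspace powtop = UNIV"
  by (simp add: powtop_def topspace_pullback_topology)

lemma cont_eval_fun: "continuous_map euclidean euclidean (\<lambda>f::'a \<Rightarrow> bool. f w)"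
  using continuous_map_product_projection[of w UNIV "\<lambda>_. euclidean :: bool topology"]
  by (simp add: euclidean_product_topology)

lemma cont_mem: "continuous_map powtop euclidean (\<lambda>S. w \<in> S)"
proof -
  have "continuous_map powtop euclidean ((\<lambda>f::'a \<Rightarrow> bool. f w) \<circ> (\<lambda>S x. x \<in> S))"
    unfolding powtop_def by (rule continuous_map_pullback[OF cont_eval_fun])
  then show ?thesis by (simp add: comp_def)
qed

lemma open_mem_gen: "openin powtop {S. (w \<in> S) \<in> V}"
  using openin_continuous_map_preimage[OF cont_mem, of V w] by (simp add: open_discrete)

lemma open_mem: "openin powtop {S. w \<in> S}"
  using open_mem_gen[of w "{True}"] by simp

lemma open_nmem: "openin powtop {S. w \<notin> S}"
  using open_mem_gen[of w "{False}"] by simp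

lemma closed_mem_gen: "closedin powtop {S. (w \<in> S) = b}"
proof -
  have "topspace powtop - {S. (w \<in> S) = b} = {S. (w \<in> S) \<in> {\<not> b}}" by auto
  then show ?thesis using open_mem_gen[of w "{\<not> b}"] by (simp add: closedin_def)
qed

lemma compact_powtop: "compact_space powtop"
proof -
  have cb: "compact_space (euclidean :: bool topology)"
    by (simp add: compact_space_def finite_imp_compact)
  have "compact_space (product_topology (\<lambda>_. euclidean :: bool topology) (UNIV :: 'a set))"
    using cb by (simp add: compact_space_product_topology)
  then have c: "compact_space (euclidean :: ('a \<Rightarrow> bool) topology)"
    by (simp add: euclidean_product_topology)
  have cm: "continuous_map euclidean (powtop :: 'a set topology) Collect"
    unfolding powtop_def by (rule continuous_map_pullback') (auto simp: comp_def continuous_map_id[unfolded id_def])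
  have "compactin powtop (Collect ` UNIV :: 'a set set)"
    using image_compactin[OF c[unfolded compact_space_def] cm] by simp
  moreover have "Collect ` UNIV = (UNIV :: 'a set set)"
    by (metis surj_def Collect_mem_eq)
  ultimately show ?thesis by (simp add: compact_space_def)
qed

lemma open_UNIV_pt[simp]: "openin powtop UNIV"
  using openin_topspace[of powtop] by simp

lemma closed_UNIV_pt[simp]: "closedin powtop UNIV"
  using closedin_topspace[of powtop] by simp

lemma closed_nmem: "closedin powtop {\<xi>. w \<notin> \<xi>}"
  using closed_mem_gen[of w False] by simp

lemma closed_mem: "closedin powtop {\<xi>. w \<in> \<xi>}"
  using closed_mem_gen[of w True] by simp

lemma cl_all: "(\<And>x. closedin powtop {\<xi>. P x \<xi>}) \<Longrightarrow> closedin powtop {\<xi>. \<forall>x. P x \<xi>}"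
proof -
  assume a: "\<And>x. closedin powtop {\<xi>. P x \<xi>}"
  have "{\<xi>. \<forall>x. P x \<xi>} = \<Inter> (range (\<lambda>x. {\<xi>. P x \<xi>}))" by auto
  then show ?thesis using closedin_Inter[of "range (\<lambda>x. {\<xi>. P x \<xi>})" powtop] a by auto
qed

lemma cl_conj: "closedin powtop {\<xi>. P \<xi>} \<Longrightarrow> closedin powtop {\<xi>. Q \<xi>} \<Longrightarrow> closedin powtop {\<xi>. P \<xi> \<and> Q \<xi>}"
proof -
  assume "closedin powtop {\<xi>. P \<xi>}" "closedin powtop {\<xi>. Q \<xi>}"
  moreover have "{\<xi>. P \<xi> \<and> Q \<xi>} = {\<xi>. P \<xi>} \<inter> {\<xi>. Q \<xi>}" by auto
  ultimately show ?thesis by (simp add: closedin_Int)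
qed

lemma cl_imp: "closedin powtop {\<xi>. Q \<xi>} \<Longrightarrow> closedin powtop {\<xi>. w \<in> \<xi> \<longrightarrow> Q \<xi>}"
proof -
  assume "closedin powtop {\<xi>. Q \<xi>}"
  moreover have "{\<xi>. w \<in> \<xi> \<longrightarrow> Q \<xi>} = {\<xi>. w \<notin> \<xi>} \<union> {\<xi>. Q \<xi>}" by auto
  ultimately show ?thesis using closed_nmem[of w] by (simp add: closedin_Un)
qed

lemma cl_cimp: "closedin powtop {\<xi>. Q \<xi>} \<Longrightarrow> closedin powtop {\<xi>. c \<longrightarrow> Q \<xi>}"
  by (cases c) auto

lemma cl_const: "closedin powtop {\<xi>. c}"
  by (cases c) auto

lemma cl_ball: "(\<And>w. closedin powtop {\<xi>. P w \<xi>}) \<Longrightarrow> closedin powtop {\<xi>. \<forall>w\<in>\<xi>. P w \<xi>}"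
proof -
  assume a: "\<And>w. closedin powtop {\<xi>. P w \<xi>}"
  have "closedin powtop {\<xi>. \<forall>w. w \<in> \<xi> \<longrightarrow> P w \<xi>}" by (intro cl_all cl_imp a)
  then show ?thesis by (simp add: Ball_def)
qed

lemma cl_imp2: "closedin powtop {\<xi>. Q \<xi>} \<Longrightarrow> closedin powtop {\<xi>. a \<in> \<xi> \<and> b \<in> \<xi> \<longrightarrow> Q \<xi>}"
proof -
  assume q: "closedin powtop {\<xi>. Q \<xi>}"
  have "closedin powtop {\<xi>. a \<in> \<xi> \<longrightarrow> b \<in> \<xi> \<longrightarrow> Q \<xi>}" by (intro cl_imp q)
  then show ?thesis by (simp add: imp_conjL)
qed

lemma cl_sub: "closedin powtop {\<xi>. \<xi> \<subseteq> B}"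
proof -
  have "closedin powtop {\<xi>. \<forall>w. w \<in> \<xi> \<longrightarrow> w \<in> B}" by (intro cl_all cl_imp cl_const)
  then show ?thesis by (simp add: subset_eq Ball_def)
qed

lemma closed_OmegaTau: "closedin powtop (OmegaTau A)"
  unfolding OmegaTau_def convex_fg_def
  by (intro cl_conj cl_ball cl_all cl_imp cl_imp2 cl_cimp cl_const cl_sub closed_mem closed_mem_gen)

lemma istop_tildeG: "istopology (\<lambda>U::'g option set. None \<notin> U \<or> finite (- U))"
  unfolding istopology_def
proof (intro conjI allI impI ballI)
  fix S T :: "'g option set"
  assume "None \<notin> S \<or> finite (- S)" "None \<notin> T \<or> finite (- T)"
  then show "None \<notin> S \<inter> T \<or> finite (- (S \<inter> T))" by auto
next
  fix K :: "'g option set set"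
  assume K: "\<forall>U\<in>K. None \<notin> U \<or> finite (- U)"
  show "None \<notin> \<Union>K \<or> finite (- \<Union>K)"
  proof (cases "None \<in> \<Union>K")
    case True
    then obtain U where "U \<in> K" "None \<in> U" by blast
    then have "finite (- U)" using K by blast
    moreover have "- \<Union>K \<subseteq> - U" using \<open>U \<in> K\<close> by blast
    ultimately show ?thesis using finite_subset by blast
  qed auto
qed

lemma openin_tildeG: "openin tildeG_top U \<longleftrightarrow> None \<notin> U \<or> finite (- U)"
  unfolding tildeG_top_def topology_inverse'[OF istop_tildeG] by (rule refl)

lemma topspace_tildeG[simp]: "topspace tildeG_top = UNIV"
  using openin_tildeG[of UNIV] openin_subset by (metis Compl_UNIV_eq finite.emptyI subset_antisym top_greatest)

lemma Hausdorff_tildeG: "Hausdorff_space tildeG_top"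
  unfolding Hausdorff_space_def
proof (intro allI impI)
  fix x y :: "'a option" assume "x \<in> topspace tildeG_top \<and> y \<in> topspace tildeG_top \<and> x \<noteq> y"
  then have xy: "x \<noteq> y" by blast
  show "\<exists>U V. openin tildeG_top U \<and> openin tildeG_top V \<and> x \<in> U \<and> y \<in> V \<and> disjnt U V"
  proof (cases x)
    case None
    then obtain b where b: "y = Some b" using xy by (cases y) auto
    show ?thesis
      by (rule exI[of _ "- {y}"], rule exI[of _ "{y}"]) (use None b in \<open>auto simp: openin_tildeG disjnt_def\<close>)
  next
    case (Some a)
    show ?thesis
      by (rule exI[of _ "{x}"], rule exI[of _ "- {x}"])
         (use Some xy in \<open>auto simp: openin_tildeG disjnt_def\<close>)
  qed
qed

lemma Hausdorff_bool: "Hausdorff_space (euclidean :: bool topology)"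
  unfolding Hausdorff_space_def
  by (metis disjnt_insert1 disjnt_empty1 empty_iff insertI1 insert_iff open_discrete open_openin singletonD disjnt_def)

lemma Hausdorff_fun: "Hausdorff_space (euclidean :: ('a \<Rightarrow> bool) topology)"
  using Hausdorff_space_product_topology[of "\<lambda>_. euclidean :: bool topology" "UNIV :: 'a set"] Hausdorff_bool
  by (simp add: euclidean_product_topology)

lemma Hausdorff_Gamma: "Hausdorff_space Gamma_top"
  unfolding Gamma_top_def using Hausdorff_space_prod_topology Hausdorff_tildeG Hausdorff_fun by blast

lemma topspace_Gamma[simp]: "topspace Gamma_top = UNIV"
  by (simp add: Gamma_top_def)

lemma open_nogen: "finite I \<Longrightarrow> openin powtop {S. \<forall>x\<in>I. gen x \<notin> S}"
proof (induction I rule: finite_induct)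
  case empty then show ?case by simp
next
  case (insert a I)
  have "{S. \<forall>x\<in>insert a I. gen x \<notin> S} = {S. gen a \<notin> S} \<inter> {S. \<forall>x\<in>I. gen x \<notin> S}" by auto
  then show ?case using openin_Int[OF open_nmem[of "gen a"] insert.IH] by simp
qed

lemma sigma1_OT: "\<xi> \<in> OmegaTau A \<Longrightarrow> sigma1 \<xi> = Some x \<longleftrightarrow> gen x \<in> \<xi>"
proof -
  assume X: "\<xi> \<in> OmegaTau A"
  show ?thesis
  proof (cases "\<exists>y. gen y \<in> \<xi>")
    case True
    then obtain y where y: "gen y \<in> \<xi>" by blast
    have "x = y" if "gen x \<in> \<xi>"
    proof -
      have "Some x = Some y" using gen_mem_phi(2)[OF X that] gen_mem_phi(2)[OF X y] by simp
      then show ?thesis by simp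
    qed
    then show ?thesis using gen_mem_phi(2)[OF X y] y by auto
  next
    case False then show ?thesis using sigma1_None[of \<xi>] by auto
  qed
qed

lemma pre_notNone: "None \<notin> U \<Longrightarrow> \<xi> \<in> OmegaTau A \<Longrightarrow> (sigma1 \<xi> \<in> U) = (\<exists>x. Some x \<in> U \<and> gen x \<in> \<xi>)"
proof -
  assume N: "None \<notin> U" and X: "\<xi> \<in> OmegaTau A"
  show ?thesis
  proof
    assume u: "sigma1 \<xi> \<in> U"
    obtain y where y: "sigma1 \<xi> = Some y" using N u by (cases "sigma1 \<xi>") auto
    then have "gen y \<in> \<xi>" using sigma1_OT[OF X] by simp
    then show "\<exists>x. Some x \<in> U \<and> gen x \<in> \<xi>" using u y by auto
  next
    assume "\<exists>x. Some x \<in> U \<and> gen x \<in> \<xi>"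
    then obtain y where y: "Some y \<in> U" "gen y \<in> \<xi>" by blast
    then have "sigma1 \<xi> = Some y" using sigma1_OT[OF X] by simp
    then show "sigma1 \<xi> \<in> U" using y by simp
  qed
qed

lemma pre_None: "None \<in> U \<Longrightarrow> \<xi> \<in> OmegaTau A \<Longrightarrow> (sigma1 \<xi> \<in> U) = (\<forall>x. Some x \<notin> U \<longrightarrow> gen x \<notin> \<xi>)"
proof -
  assume N: "None \<in> U" and X: "\<xi> \<in> OmegaTau A"
  show ?thesis
  proof
    assume u: "sigma1 \<xi> \<in> U"
    show "\<forall>x. Some x \<notin> U \<longrightarrow> gen x \<notin> \<xi>"
    proof (intro allI impI notI)
      fix x assume "Some x \<notin> U" "gen x \<in> \<xi>"
      then show False using u sigma1_OT[OF X, of x] by simp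
    qed
  next
    assume a: "\<forall>x. Some x \<notin> U \<longrightarrow> gen x \<notin> \<xi>"
    show "sigma1 \<xi> \<in> U"
    proof (cases "sigma1 \<xi>")
      case None then show ?thesis using N by simp
    next
      case (Some y)
      then have "gen y \<in> \<xi>" using sigma1_OT[OF X] by simp
      then have "Some y \<in> U" using a by blast
      then show ?thesis using Some by simp
    qed
  qed
qed

lemma open_someGen: "openin powtop {S. \<exists>x. Some x \<in> U \<and> gen x \<in> S}"
proof -
  have e: "{S. \<exists>x. Some x \<in> U \<and> gen x \<in> S} = \<Union> ((\<lambda>x. {S. gen x \<in> S}) ` {x. Some x \<in> U})"
    by auto
  show ?thesis unfolding e by (rule openin_Union) (auto simp: open_mem)
qed

lemma open_noGen: "finite (- U) \<Longrightarrow> openin powtop {S. \<forall>x. Some x \<notin> U \<longrightarrow> gen x \<notin> S}"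
proof -
  assume fin: "finite (- U)"
  have fI: "finite {x. Some x \<notin> U}"
    using finite_vimageI[of "- U" Some] fin by (simp add: vimage_def)
  have e: "{S. \<forall>x. Some x \<notin> U \<longrightarrow> gen x \<notin> S} = {S. \<forall>x\<in>{x. Some x \<notin> U}. gen x \<notin> S}"
    by auto
  show ?thesis unfolding e by (rule open_nogen[OF fI])
qed

lemma cont_sigma1: "continuous_map (subtopology powtop (OmegaTau A)) tildeG_top sigma1"
  unfolding continuous_map_def
proof (intro conjI allI impI)
  show "sigma1 \<in> topspace (subtopology powtop (OmegaTau A)) \<rightarrow> topspace tildeG_top" by simp
  fix U :: "'a option set" assume "openin tildeG_top U"
  then have U: "None \<notin> U \<or> finite (- U)" by (simp add: openin_tildeG)
  show "openin (subtopology powtop (OmegaTau A)) {x \<in> topspace (subtopology powtop (OmegaTau A)). sigma1 x \<in> U}"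
  proof (cases "None \<in> U")
    case False
    have "{x \<in> topspace (subtopology powtop (OmegaTau A)). sigma1 x \<in> U}
        = {S. \<exists>x. Some x \<in> U \<and> gen x \<in> S} \<inter> OmegaTau A"
      using pre_notNone[OF False] by auto
    then show ?thesis using open_someGen[of U] by (auto simp: openin_subtopology)
  next
    case True
    then have fin: "finite (- U)" using U by blast
    have "{x \<in> topspace (subtopology powtop (OmegaTau A)). sigma1 x \<in> U}
        = {S. \<forall>x. Some x \<notin> U \<longrightarrow> gen x \<notin> S} \<inter> OmegaTau A"
      using pre_None[OF True] by auto
    then show ?thesis using open_noGen[OF fin] by (auto simp: openin_subtopology)
  qed
qed

lemma cont_Rxi: "continuous_map (subtopology powtop S) euclidean Rxi"
proof -
  have "continuous_map powtop (product_topology (\<lambda>_. euclidean :: bool topology) UNIV) Rxi"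
    unfolding continuous_map_componentwise_UNIV Rxi_def by (simp add: cont_mem)
  then show ?thesis using continuous_map_from_subtopology[of powtop euclidean Rxi S]
    by (simp add: euclidean_product_topology)
qed

lemma cont_phi: "continuous_map (subtopology powtop (OmegaTau A)) Gamma_top phiA"
  unfolding Gamma_top_def continuous_map_pairwise
  using cont_sigma1[of A] cont_Rxi[of "OmegaTau A"] by (simp add: phiA_def comp_def)


abbreviation Dset :: "('g \<Rightarrow> 'g \<Rightarrow> bool) \<Rightarrow> ('g option \<times> ('g \<Rightarrow> bool)) set" where
  "Dset A \<equiv> {(Some j, col A j) | j. True}"

lemma OT_sub_OmegaTau: "OmegaTilde A \<subseteq> OmegaTau A"
  unfolding OmegaTilde_def using closure_of_subset_topspace by fastforce

lemma compact_OT: "compactin (subtopology powtop (OmegaTau A)) (OmegaTilde A)"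
proof -
  have "closedin (subtopology powtop (OmegaTau A)) (OmegaTilde A)"
    unfolding OmegaTilde_def by simp
  then have "closedin powtop (OmegaTilde A)" using closedin_trans_full closed_OmegaTau by blast
  then have "compactin powtop (OmegaTilde A)" using closedin_compact_space compact_powtop by blast
  then show ?thesis using OT_sub_OmegaTau by (simp add: compactin_subtopology)
qed

lemma phi_OT_sub: "phiA ` OmegaTilde A \<subseteq> GammaTilde A"
proof -
  let ?U = "{\<xi> \<in> OmegaTau A. fg_unbounded \<xi>}"
  have "phiA ` ?U \<subseteq> Dset A"
  proof
    fix p assume "p \<in> phiA ` ?U"
    then obtain \<xi> where X: "\<xi> \<in> OmegaTau A" "fg_unbounded \<xi>" and p: "p = phiA \<xi>" by blast
    obtain x where "gen x \<in> \<xi>" using unbounded_gen[OF X] by blast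
    then show "p \<in> Dset A" using gen_mem_phi(1)[OF X(1)] p by blast
  qed
  then have "Gamma_top closure_of (phiA ` ?U) \<subseteq> GammaTilde A"
    unfolding GammaTilde_def by (rule closure_of_mono)
  moreover have "phiA ` OmegaTilde A \<subseteq> Gamma_top closure_of (phiA ` ?U)"
    unfolding OmegaTilde_def by (rule continuous_map_image_closure_subset[OF cont_phi])
  ultimately show ?thesis by blast
qed

lemma D_sub_phi:
  assumes "\<forall>i. \<exists>j. A i j"
  shows "\<exists>\<xi>\<in>OmegaTilde A. phiA \<xi> = (Some j, col A j)"
proof -
  obtain \<xi> where X: "\<xi> \<in> OmegaTau A" "fg_unbounded \<xi>" "phiA \<xi> = (Some j, col A j)"
    using exists_Xi[OF assms] by blast
  have "{\<xi> \<in> OmegaTau A. fg_unbounded \<xi>} \<subseteq> topspace (subtopology powtop (OmegaTau A))" by auto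
  then have "\<xi> \<in> OmegaTilde A" unfolding OmegaTilde_def using X closure_of_subset by blast
  then show ?thesis using X by blast
qed

lemma phi_surj:
  assumes "\<forall>i. \<exists>j. A i j"
  shows "phiA ` OmegaTilde A = GammaTilde A"
proof
  show "phiA ` OmegaTilde A \<subseteq> GammaTilde A" by (rule phi_OT_sub)
  have "compactin Gamma_top (phiA ` OmegaTilde A)"
    using image_compactin[OF compact_OT cont_phi] .
  then have c: "closedin Gamma_top (phiA ` OmegaTilde A)"
    using compactin_imp_closedin[OF Hausdorff_Gamma] by blast
  have "Dset A \<subseteq> phiA ` OmegaTilde A" using D_sub_phi[OF assms] by (auto simp: image_iff) (metis)
  then show "GammaTilde A \<subseteq> phiA ` OmegaTilde A"
    unfolding GammaTilde_def using closure_of_minimal c by blast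
qed

lemma phi_surj_Omega:
  assumes "\<forall>i. \<exists>j. A i j"
  shows "phiA ` Omega A = Gamma A"
proof
  show "phiA ` Omega A \<subseteq> Gamma A"
  proof
    fix p assume "p \<in> phiA ` Omega A"
    then obtain \<xi> where X: "\<xi> \<in> OmegaTilde A" "\<xi> \<noteq> {fg_unit}" and p: "p = phiA \<xi>"
      by (auto simp: Omega_def)
    have "p \<noteq> (None, \<lambda>_. False)" using phi_zero[of \<xi> A] X OT_sub_OmegaTau p by (auto simp: fg_unit_def)
    then show "p \<in> Gamma A" using phi_OT_sub X p by (auto simp: Gamma_def)
  qed
  show "Gamma A \<subseteq> phiA ` Omega A"
  proof
    fix p assume "p \<in> Gamma A"
    then have p: "p \<in> GammaTilde A" "p \<noteq> (None, \<lambda>_. False)" by (auto simp: Gamma_def)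
    then obtain \<xi> where X: "\<xi> \<in> OmegaTilde A" "p = phiA \<xi>" using phi_surj[OF assms] by blast
    then have "\<xi> \<noteq> {fg_unit}" using phi_e p by (auto simp: fg_unit_def)
    then show "p \<in> phiA ` Omega A" using X by (auto simp: Omega_def)
  qed
qed

lemma cont_phi_OT: "continuous_map (subtopology powtop (OmegaTilde A)) Gamma_top phiA"
  by (rule continuous_map_from_subtopology_mono[OF cont_phi OT_sub_OmegaTau])


abbreviation XK :: "('g \<Rightarrow> 'g \<Rightarrow> bool) \<Rightarrow> ('g option \<times> ('g \<Rightarrow> bool)) topology" where
  "XK A \<equiv> subtopology Gamma_top (GammaTilde A)"

definition isext :: "('g \<Rightarrow> 'g \<Rightarrow> bool) \<Rightarrow> ('g \<Rightarrow> complex) \<Rightarrow> ('g option \<times> ('g \<Rightarrow> bool) \<Rightarrow> complex) \<Rightarrow> bool" where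
  "isext A f h = (continuous_map (XK A) euclidean h
                   \<and> (\<forall>j. h (Some j, col A j) = f j)
                   \<and> (\<forall>p. p \<notin> GammaTilde A \<longrightarrow> h p = 0))"

definition Ext :: "('g \<Rightarrow> 'g \<Rightarrow> bool) \<Rightarrow> ('g \<Rightarrow> complex) set" where
  "Ext A = {f. \<exists>h. isext A f h}"

lemma closed_K: "closedin Gamma_top (GammaTilde A)"
  unfolding GammaTilde_def by simp

lemma topspace_XK[simp]: "topspace (XK A) = GammaTilde A"
  by simp

lemma emb_K: "(Some j, col A j) \<in> GammaTilde A"
  unfolding GammaTilde_def by (rule closure_of_subset[THEN subsetD]) auto

lemma ext_bound:
  assumes h: "continuous_map (XK A) euclidean h" and b: "\<forall>j. cmod (h (Some j, col A j)) \<le> e"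
    and p: "p \<in> GammaTilde A"
  shows "cmod (h p) \<le> e"
proof -
  let ?C = "{p \<in> topspace (XK A). h p \<in> cball 0 e}"
  have "closedin (XK A) ?C"
    by (rule closedin_continuous_map_preimage[OF h]) (simp add: closed_closedin[symmetric])
  then have c: "closedin Gamma_top ?C" using closedin_trans_full closed_K by blast
  have D: "Dset A \<subseteq> ?C"
  proof
    fix p assume "p \<in> Dset A"
    then obtain j where p: "p = (Some j, col A j)" by blast
    have "cmod (h p) \<le> e" using b p by simp
    then have "h p \<in> cball 0 e" by (simp add: mem_cball dist_0_norm)
    then show "p \<in> ?C" using emb_K p by simp
  qed
  have "Gamma_top closure_of Dset A \<subseteq> ?C" by (rule closure_of_minimal[OF D c])
  then have "p \<in> ?C" using p unfolding GammaTilde_def by blast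
  then show ?thesis by (simp add: mem_cball dist_0_norm)
qed

lemma hat_eq:
  assumes "isext A f h" shows "hat A f = h"
  unfolding hat_def
proof (rule the_equality)
  show "continuous_map (subtopology Gamma_top (GammaTilde A)) euclidean h \<and> (\<forall>j. h (Some j, col A j) = f j) \<and> (\<forall>p. p \<notin> GammaTilde A \<longrightarrow> h p = 0)"
    using assms by (simp add: isext_def)
  fix h' assume h': "continuous_map (subtopology Gamma_top (GammaTilde A)) euclidean h' \<and> (\<forall>j. h' (Some j, col A j) = f j) \<and> (\<forall>p. p \<notin> GammaTilde A \<longrightarrow> h' p = 0)"
  have hc: "continuous_map (XK A) euclidean h" and hv: "\<forall>j. h (Some j, col A j) = f j"
    and h0: "\<forall>p. p \<notin> GammaTilde A \<longrightarrow> h p = 0"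
    using assms by (auto simp: isext_def)
  have c: "continuous_map (XK A) euclidean (\<lambda>p. h' p - h p)"
    using h' hc by (intro continuous_map_diff) auto
  show "h' = h"
  proof
    fix p show "h' p = h p"
    proof (cases "p \<in> GammaTilde A")
      case True
      have "\<forall>j. cmod (h' (Some j, col A j) - h (Some j, col A j)) \<le> 0" using h' hv by simp
      then have "cmod (h' p - h p) \<le> 0" using ext_bound[OF c _ True] by blast
      then show ?thesis by simp
    next
      case False
      have "h' p = 0" using h' False by blast
      moreover have "h p = 0" using h0 False by blast
      ultimately show ?thesis by simp
    qed
  qed
qed

lemma cm_mult: "continuous_map X euclidean f \<Longrightarrow> continuous_map X euclidean g \<Longrightarrow> continuous_map X euclidean (\<lambda>x. f x * g x :: complex)"
  by (simp add: continuous_map_atin tendsto_mult)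

lemma cm_cnj: "continuous_map X euclidean f \<Longrightarrow> continuous_map X euclidean (\<lambda>x. cnj (f x))"
  by (simp add: continuous_map_atin tendsto_cnj)

lemma isext_zero: "isext A (\<lambda>_. 0) (\<lambda>_. 0)"
  by (simp add: isext_def)

lemma isext_add: "isext A f h \<Longrightarrow> isext A g k \<Longrightarrow> isext A (\<lambda>x. f x + g x) (\<lambda>p. h p + k p)"
  by (auto simp: isext_def intro: continuous_map_add)

lemma isext_smult: "isext A f h \<Longrightarrow> isext A (\<lambda>x. c * f x) (\<lambda>p. c * h p)"
  by (auto simp: isext_def intro: cm_mult)

lemma isext_mult: "isext A f h \<Longrightarrow> isext A g k \<Longrightarrow> isext A (\<lambda>x. f x * g x) (\<lambda>p. h p * k p)"
  by (auto simp: isext_def intro: cm_mult)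

lemma isext_cnj: "isext A f h \<Longrightarrow> isext A (\<lambda>x. cnj (f x)) (\<lambda>p. cnj (h p))"
  by (auto simp: isext_def intro: cm_cnj)

lemma cm_ind:
  assumes "openin X S" "openin X (topspace X - S)"
  shows "continuous_map X euclidean (\<lambda>x. if x \<in> S then a else b)"
  unfolding continuous_map_def
proof (intro conjI allI impI)
  show "(\<lambda>x. if x \<in> S then a else b) \<in> topspace X \<rightarrow> topspace euclidean" by simp
  fix U :: "'b set"
  have S: "S \<subseteq> topspace X" using assms(1) openin_subset by blast
  have "{x \<in> topspace X. (if x \<in> S then a else b) \<in> U} =
     (if a \<in> U then S else {}) \<union> (if b \<in> U then topspace X - S else {})"
    using S by auto
  then show "openin X {x \<in> topspace X. (if x \<in> S then a else b) \<in> U}"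
    using assms by (auto intro: openin_Un)
qed

lemma open_Gamma_fst: "openin Gamma_top {p. fst p = Some i}"
proof -
  have e: "{p. fst p = Some i} = {Some i} \<times> UNIV" by auto
  show ?thesis unfolding e unfolding Gamma_top_def openin_prod_Times_iff by (simp add: openin_tildeG)
qed

lemma open_Gamma_fst': "openin Gamma_top (topspace Gamma_top - {p :: 'g option \<times> ('g \<Rightarrow> bool). fst p = Some i})"
proof -
  have e: "topspace Gamma_top - {p :: 'g option \<times> ('g \<Rightarrow> bool). fst p = Some i} = (- {Some i}) \<times> UNIV" by auto
  show ?thesis unfolding e unfolding Gamma_top_def openin_prod_Times_iff by (simp add: openin_tildeG)
qed

lemma open_fun_coord: "openin (euclidean :: ('a \<Rightarrow> bool) topology) {f. f i = b}"
  using openin_continuous_map_preimage[OF cont_eval_fun, of "{b}" i] by (simp add: open_discrete)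

lemma open_Gamma_snd: "openin Gamma_top {p. snd p i}"
proof -
  have e: "{p. snd p i} = UNIV \<times> {f. f i = True}" by auto
  show ?thesis unfolding e unfolding Gamma_top_def openin_prod_Times_iff using open_fun_coord[of i True]
    by (simp add: openin_tildeG)
qed

lemma open_Gamma_snd': "openin Gamma_top (topspace Gamma_top - {p :: 'g option \<times> ('g \<Rightarrow> bool). snd p i})"
proof -
  have e: "topspace Gamma_top - {p :: 'g option \<times> ('g \<Rightarrow> bool). snd p i} = UNIV \<times> {f. f i = False}" by auto
  show ?thesis unfolding e unfolding Gamma_top_def openin_prod_Times_iff using open_fun_coord[of i False]
    by (simp add: openin_tildeG)
qed

definition hat1 :: "('g \<Rightarrow> 'g \<Rightarrow> bool) \<Rightarrow> 'g option \<times> ('g \<Rightarrow> bool) \<Rightarrow> complex" where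
  "hat1 A p = (if p \<in> GammaTilde A then 1 else 0)"
definition hatd :: "('g \<Rightarrow> 'g \<Rightarrow> bool) \<Rightarrow> 'g \<Rightarrow> 'g option \<times> ('g \<Rightarrow> bool) \<Rightarrow> complex" where
  "hatd A i p = (if p \<in> GammaTilde A then (if p \<in> {p. fst p = Some i} then 1 else 0) else 0)"
definition hatr :: "('g \<Rightarrow> 'g \<Rightarrow> bool) \<Rightarrow> 'g \<Rightarrow> 'g option \<times> ('g \<Rightarrow> bool) \<Rightarrow> complex" where
  "hatr A i p = (if p \<in> GammaTilde A then (if p \<in> {p. snd p i} then 1 else 0) else 0)"

lemma isext_1: "isext A (\<lambda>_. 1) (hat1 A)"
  unfolding isext_def
proof (intro conjI allI impI)
  show "continuous_map (XK A) euclidean (hat1 A)"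
    by (rule continuous_map_eq[of _ _ "\<lambda>_. 1"]) (auto simp: hat1_def)
qed (auto simp: hat1_def emb_K)

lemma isext_delta: "isext A (delta i) (hatd A i)"
  unfolding isext_def
proof (intro conjI allI impI)
  have "continuous_map Gamma_top euclidean (\<lambda>p. if p \<in> {p. fst p = Some i} then 1 else (0::complex))"
    by (rule cm_ind[OF open_Gamma_fst open_Gamma_fst'])
  then have "continuous_map (XK A) euclidean (\<lambda>p. if p \<in> {p. fst p = Some i} then 1 else (0::complex))"
    by (rule continuous_map_from_subtopology)
  then show "continuous_map (XK A) euclidean (hatd A i)"
    by (rule continuous_map_eq) (auto simp: hatd_def)
qed (auto simp: hatd_def emb_K delta_def)

lemma isext_rho: "isext A (rho A i) (hatr A i)"
  unfolding isext_def
proof (intro conjI allI impI)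
  have "continuous_map Gamma_top euclidean (\<lambda>p. if p \<in> {p. snd p i} then 1 else (0::complex))"
    by (rule cm_ind[OF open_Gamma_snd open_Gamma_snd'])
  then have "continuous_map (XK A) euclidean (\<lambda>p. if p \<in> {p. snd p i} then 1 else (0::complex))"
    by (rule continuous_map_from_subtopology)
  then show "continuous_map (XK A) euclidean (hatr A i)"
    by (rule continuous_map_eq) (auto simp: hatr_def)
qed (auto simp: hatr_def emb_K[unfolded col_def] rho_def col_def)


lemma small_zero: "(\<And>n. cmod z \<le> c * inverse (real (Suc n))) \<Longrightarrow> z = 0"
proof (rule ccontr)
  assume a: "\<And>n. cmod z \<le> c * inverse (real (Suc n))" and z: "z \<noteq> 0"
  have c: "c > 0"
  proof (rule ccontr)
    assume "\<not> c > 0"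
    then have "cmod z \<le> 0" using a[of 0] by (simp del: norm_le_zero_iff)
    then show False using z by simp
  qed
  obtain n where n: "inverse (real (Suc n)) < cmod z / c" using reals_Archimedean[of "cmod z / c"] z c by auto
  then have "c * inverse (real (Suc n)) < cmod z" using c by (simp add: field_simps)
  then show False using a[of n] by simp
qed

lemma inv_Suc_mono: "m \<le> n \<Longrightarrow> inverse (real (Suc n)) \<le> inverse (real (Suc m))"
  by (simp add: field_simps)

lemma norm_tri3: "cmod (a - b) \<le> cmod (a - c) + cmod (c - b)"
  by (metis diff_add_cancel norm_triangle_ineq add_diff_eq diff_diff_eq2)

lemma Ext_closed:
  assumes ap: "\<forall>e>0. \<exists>g\<in>Ext A. \<forall>x. cmod (f x - g x) \<le> e"
  shows "f \<in> Ext A"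
proof -
  have "\<forall>n. \<exists>g. g \<in> Ext A \<and> (\<forall>x. cmod (f x - g x) \<le> inverse (real (Suc n)))"
  proof
    fix n
    have "inverse (real (Suc n)) > 0" by simp
    then show "\<exists>g. g \<in> Ext A \<and> (\<forall>x. cmod (f x - g x) \<le> inverse (real (Suc n)))"
      using ap by blast
  qed
  then obtain g where g: "\<And>n. g n \<in> Ext A" and gf: "\<And>n x. cmod (f x - g n x) \<le> inverse (real (Suc n))"
    by metis
  have "\<forall>n. \<exists>h. isext A (g n) h" using g by (simp add: Ext_def)
  then obtain h where h: "\<And>n. isext A (g n) (h n)" by metis
  have hc: "continuous_map (XK A) euclidean (h n)" for n using h[of n] by (simp add: isext_def)
  have hv: "h n (Some j, col A j) = g n j" for n j using h[of n] by (simp add: isext_def)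
  have h0: "p \<notin> GammaTilde A \<Longrightarrow> h n p = 0" for n p using h[of n] unfolding isext_def by blast
  have cau: "cmod (h n p - h m p) \<le> inverse (real (Suc n)) + inverse (real (Suc m))" for n m p
  proof (cases "p \<in> GammaTilde A")
    case True
    have c: "continuous_map (XK A) euclidean (\<lambda>p. h n p - h m p)"
      using hc by (intro continuous_map_diff) auto
    have "\<forall>j. cmod (h n (Some j, col A j) - h m (Some j, col A j)) \<le> inverse (real (Suc n)) + inverse (real (Suc m))"
    proof
      fix j
      have "cmod (g n j - g m j) \<le> cmod (g n j - f j) + cmod (f j - g m j)" by (rule norm_tri3)
      also have "\<dots> \<le> inverse (real (Suc n)) + inverse (real (Suc m))"
        using gf[of j n] gf[of j m] by (simp add: norm_minus_commute add_mono)
      finally show "cmod (h n (Some j, col A j) - h m (Some j, col A j)) \<le> inverse (real (Suc n)) + inverse (real (Suc m))"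
        by (simp add: hv)
    qed
    then show ?thesis using ext_bound[OF c _ True] by blast
  next
    case False then show ?thesis using h0 by simp
  qed
  have cauchy: "Cauchy (\<lambda>n. h n p)" for p
  proof (rule CauchyI)
    fix e :: real assume e: "e > 0"
    obtain M where M: "inverse (real (Suc M)) < e / 2" using reals_Archimedean[of "e/2"] e by auto
    show "\<exists>M. \<forall>m\<ge>M. \<forall>n\<ge>M. norm (h m p - h n p) < e"
    proof (intro exI allI impI)
      fix m n assume "M \<le> m" "M \<le> n"
      then have "inverse (real (Suc m)) + inverse (real (Suc n)) \<le> inverse (real (Suc M)) + inverse (real (Suc M))"
        by (intro add_mono inv_Suc_mono)
      then show "norm (h m p - h n p) < e" using cau[of m p n] M by simp
    qed
  qed
  define H where "H p = (if p \<in> GammaTilde A then lim (\<lambda>n. h n p) else 0)" for p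
  have conv: "(\<lambda>n. h n p) \<longlonglongrightarrow> lim (\<lambda>n. h n p)" for p
    using cauchy[of p] by (simp add: Cauchy_convergent_iff convergent_LIMSEQ_iff)
  have unif: "cmod (h n p - H p) \<le> inverse (real (Suc n))" for n p
  proof (cases "p \<in> GammaTilde A")
    case True
    have t1: "(\<lambda>m. cmod (h n p - h m p)) \<longlonglongrightarrow> cmod (h n p - H p)"
      using True conv[of p] by (auto simp: H_def intro!: tendsto_intros)
    have t2: "(\<lambda>m. inverse (real (Suc n)) + inverse (real (Suc m))) \<longlonglongrightarrow> inverse (real (Suc n)) + 0"
      by (intro tendsto_add tendsto_const LIMSEQ_inverse_real_of_nat)
    have "cmod (h n p - H p) \<le> inverse (real (Suc n)) + 0"
      by (rule tendsto_le[OF _ t2 t1]) (use cau in auto)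
    then show ?thesis by simp
  next
    case False then show ?thesis using h0 by (simp add: H_def)
  qed
  have Hc: "continuous_map (XK A) euclidean H"
  proof -
    have "continuous_map (XK A) Met_TC.mtopology H"
    proof (rule Met_TC.continuous_map_uniform_limit[where F = sequentially and f = h])
      show "\<forall>\<^sub>F n in sequentially. continuous_map (XK A) Met_TC.mtopology (h n)"
        using hc by simp
      fix e :: real assume e: "0 < e"
      obtain M where M: "inverse (real (Suc M)) < e" using reals_Archimedean[OF e] by auto
      show "\<forall>\<^sub>F n in sequentially. \<forall>x\<in>topspace (XK A). H x \<in> UNIV \<and> dist (h n x) (H x) < e"
      proof (rule eventually_sequentiallyI[of M])
        fix n assume "M \<le> n"
        then have "inverse (real (Suc n)) < e" using M inv_Suc_mono[of M n] by linarith
        then show "\<forall>x\<in>topspace (XK A). H x \<in> UNIV \<and> dist (h n x) (H x) < e"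
          using unif by (auto simp: dist_norm intro: le_less_trans)
      qed
    qed simp
    then show ?thesis by simp
  qed
  have Hv: "H (Some j, col A j) = f j" for j
  proof -
    have "cmod (H (Some j, col A j) - f j) \<le> 2 * inverse (real (Suc n))" for n
    proof -
      have "cmod (H (Some j, col A j) - f j) \<le> cmod (H (Some j, col A j) - h n (Some j, col A j)) + cmod (h n (Some j, col A j) - f j)"
        by (rule norm_tri3)
      also have "\<dots> \<le> inverse (real (Suc n)) + inverse (real (Suc n))"
        using unif[of n "(Some j, col A j)"] gf[of j n] hv[of n j]
        by (intro add_mono) (simp_all add: norm_minus_commute)
      finally show ?thesis by simp
    qed
    then show ?thesis using small_zero[of "H (Some j, col A j) - f j" 2] by simp
  qed
  have "isext A f H" unfolding isext_def using Hc Hv by (simp add: H_def)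
  then show ?thesis by (auto simp: Ext_def)
qed

lemma Ext_add: "f \<in> Ext A \<Longrightarrow> g \<in> Ext A \<Longrightarrow> (\<lambda>x. f x + g x) \<in> Ext A"
  unfolding Ext_def using isext_add by blast
lemma Ext_smult: "f \<in> Ext A \<Longrightarrow> (\<lambda>x. c * f x) \<in> Ext A"
  unfolding Ext_def using isext_smult by blast
lemma Ext_mult: "f \<in> Ext A \<Longrightarrow> g \<in> Ext A \<Longrightarrow> (\<lambda>x. f x * g x) \<in> Ext A"
  unfolding Ext_def using isext_mult by blast
lemma Ext_cnj: "f \<in> Ext A \<Longrightarrow> (\<lambda>x. cnj (f x)) \<in> Ext A"
  unfolding Ext_def using isext_cnj by blast
lemma Ext_zero: "(\<lambda>_. 0) \<in> Ext A"
  unfolding Ext_def using isext_zero by blast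

lemma star_Ext: "S \<subseteq> Ext A \<Longrightarrow> f \<in> star_alg S \<Longrightarrow> f \<in> Ext A"
proof -
  assume S: "S \<subseteq> Ext A" and f: "f \<in> star_alg S"
  from f show "f \<in> Ext A" using S
    by (induction rule: star_alg.induct) (auto intro: Ext_add Ext_smult Ext_mult Ext_cnj Ext_zero)
qed

lemma cstar_Ext: "S \<subseteq> Ext A \<Longrightarrow> cstar_gen S \<subseteq> Ext A"
proof
  fix f assume S: "S \<subseteq> Ext A" and f: "f \<in> cstar_gen S"
  show "f \<in> Ext A"
  proof (rule Ext_closed)
    show "\<forall>e>0. \<exists>g\<in>Ext A. \<forall>x. cmod (f x - g x) \<le> e"
      using f star_Ext[OF S] unfolding cstar_gen_def by blast
  qed
qed


lemma psi_hat: "f \<in> Ext A \<Longrightarrow> isext A f (hat A f)"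
  unfolding Ext_def using hat_eq by fastforce

lemma psi_eq: "isext A f h \<Longrightarrow> psiA A f = (\<lambda>\<xi>. if \<xi> \<in> OmegaTilde A then h (phiA \<xi>) else 0)"
  unfolding psiA_def using hat_eq by metis

lemma phi_in_K: "\<xi> \<in> OmegaTilde A \<Longrightarrow> phiA \<xi> \<in> GammaTilde A"
  using phi_OT_sub by blast

lemma psi_cont: "f \<in> Ext A \<Longrightarrow> continuous_map (subtopology powtop (OmegaTilde A)) euclidean (psiA A f)"
proof -
  assume f: "f \<in> Ext A"
  have c1: "continuous_map (subtopology powtop (OmegaTilde A)) (XK A) phiA"
    by (rule continuous_map_into_subtopology[OF cont_phi_OT]) (auto simp: phi_in_K)
  have c2: "continuous_map (XK A) euclidean (hat A f)" using psi_hat[OF f] by (simp add: isext_def)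
  have "continuous_map (subtopology powtop (OmegaTilde A)) euclidean (hat A f \<circ> phiA)"
    by (rule continuous_map_compose[OF c1 c2])
  then show ?thesis by (rule continuous_map_eq) (auto simp: psiA_def)
qed

lemma psi_add: "f \<in> Ext A \<Longrightarrow> g \<in> Ext A \<Longrightarrow> psiA A (\<lambda>x. f x + g x) = (\<lambda>\<xi>. psiA A f \<xi> + psiA A g \<xi>)"
proof -
  assume f: "f \<in> Ext A" and g: "g \<in> Ext A"
  note hf = psi_hat[OF f] and hg = psi_hat[OF g]
  show ?thesis unfolding psi_eq[OF isext_add[OF hf hg]] psi_eq[OF hf] psi_eq[OF hg] by auto
qed

lemma psi_smult: "f \<in> Ext A \<Longrightarrow> psiA A (\<lambda>x. c * f x) = (\<lambda>\<xi>. c * psiA A f \<xi>)"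
proof -
  assume f: "f \<in> Ext A"
  note hf = psi_hat[OF f]
  show ?thesis unfolding psi_eq[OF isext_smult[OF hf]] psi_eq[OF hf] by auto
qed

lemma psi_mult: "f \<in> Ext A \<Longrightarrow> g \<in> Ext A \<Longrightarrow> psiA A (\<lambda>x. f x * g x) = (\<lambda>\<xi>. psiA A f \<xi> * psiA A g \<xi>)"
proof -
  assume f: "f \<in> Ext A" and g: "g \<in> Ext A"
  note hf = psi_hat[OF f] and hg = psi_hat[OF g]
  show ?thesis unfolding psi_eq[OF isext_mult[OF hf hg]] psi_eq[OF hf] psi_eq[OF hg] by auto
qed

lemma psi_cnj: "f \<in> Ext A \<Longrightarrow> psiA A (\<lambda>x. cnj (f x)) = (\<lambda>\<xi>. cnj (psiA A f \<xi>))"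
proof -
  assume f: "f \<in> Ext A"
  note hf = psi_hat[OF f]
  show ?thesis unfolding psi_eq[OF isext_cnj[OF hf]] psi_eq[OF hf] by auto
qed

lemma psi_zero: "psiA A (\<lambda>_. 0) = (\<lambda>_. 0)"
  unfolding psi_eq[OF isext_zero] by auto

lemma psi_one: "psiA A (\<lambda>_. 1) = charfun (OmegaTilde A)"
  unfolding psi_eq[OF isext_1] by (auto simp: fun_eq_iff charfun_def hat1_def phi_in_K)

lemma psi_delta: "psiA A (delta i) = PA A i"
proof -
  have "\<xi> \<in> OmegaTilde A \<Longrightarrow> fst (phiA \<xi>) = Some i \<longleftrightarrow> gen i \<in> \<xi>" for \<xi>
    using sigma1_OT OT_sub_OmegaTau by (fastforce simp: phiA_def)
  then show ?thesis unfolding psi_eq[OF isext_delta]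
    by (auto simp: fun_eq_iff PA_def charfun_def hatd_def phi_in_K Delta_def)
qed

lemma psi_rho: "psiA A (rho A i) = QA A i"
proof -
  have "snd (phiA \<xi>) i \<longleftrightarrow> gen_inv i \<in> \<xi>" for \<xi>
    by (simp add: phiA_def Rxi_def)
  then show ?thesis unfolding psi_eq[OF isext_rho]
    by (auto simp: fun_eq_iff QA_def charfun_def hatr_def phi_in_K Delta_def)
qed

lemma psi_eval: "f \<in> Ext A \<Longrightarrow> \<xi> \<in> OmegaTilde A \<Longrightarrow> phiA \<xi> = (Some j, col A j) \<Longrightarrow> psiA A f \<xi> = f j"
  using psi_hat[of f A] by (simp add: psiA_def isext_def)

lemma psi_iso1:
  assumes f: "f \<in> Ext A" and g: "g \<in> Ext A" and e: "e \<ge> 0" and b: "\<forall>x. cmod (f x - g x) \<le> e"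
  shows "cmod (psiA A f \<xi> - psiA A g \<xi>) \<le> e"
proof (cases "\<xi> \<in> OmegaTilde A")
  case True
  have hf: "isext A f (hat A f)" and hg: "isext A g (hat A g)" using psi_hat f g by blast+
  have c: "continuous_map (XK A) euclidean (\<lambda>p. hat A f p - hat A g p)"
    using hf hg by (intro continuous_map_diff) (auto simp: isext_def)
  have "\<forall>j. cmod (hat A f (Some j, col A j) - hat A g (Some j, col A j)) \<le> e"
    using hf hg b by (simp add: isext_def)
  then have "cmod (hat A f (phiA \<xi>) - hat A g (phiA \<xi>)) \<le> e"
    using ext_bound[OF c _ phi_in_K[OF True]] by blast
  then show ?thesis using True by (simp add: psiA_def)
next
  case False then show ?thesis using e by (simp add: psiA_def)
qed

context
  fixes A :: "'g \<Rightarrow> 'g \<Rightarrow> bool"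
  assumes nz: "\<forall>i. \<exists>j. A i j"
begin

definition xi :: "'g \<Rightarrow> 'g word set" where
  "xi j = (SOME \<xi>. \<xi> \<in> OmegaTilde A \<and> phiA \<xi> = (Some j, col A j))"

lemma xi: "xi j \<in> OmegaTilde A" "phiA (xi j) = (Some j, col A j)"
proof -
  have "\<exists>\<xi>. \<xi> \<in> OmegaTilde A \<and> phiA \<xi> = (Some j, col A j)" using D_sub_phi[OF nz] by blast
  then have "xi j \<in> OmegaTilde A \<and> phiA (xi j) = (Some j, col A j)"
    unfolding xi_def by (rule someI_ex)
  then show "xi j \<in> OmegaTilde A" "phiA (xi j) = (Some j, col A j)" by auto
qed

lemma psi_xi: "f \<in> Ext A \<Longrightarrow> psiA A f (xi j) = f j"
  by (rule psi_eval[OF _ xi(1) xi(2)])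

lemma psi_inj: "f \<in> Ext A \<Longrightarrow> g \<in> Ext A \<Longrightarrow> psiA A f = psiA A g \<Longrightarrow> f = g"
  using psi_xi by (metis ext)

lemma psi_iso2:
  assumes f: "f \<in> Ext A" and g: "g \<in> Ext A" and b: "\<forall>\<xi>. cmod (psiA A f \<xi> - psiA A g \<xi>) \<le> e"
  shows "cmod (f x - g x) \<le> e"
  using b[rule_format, of "xi x"] psi_xi[OF f] psi_xi[OF g] by simp

lemma star_img1:
  assumes S: "S \<subseteq> Ext A" and f: "f \<in> star_alg S"
  shows "psiA A f \<in> star_alg (psiA A ` S)"
  using f
proof (induction rule: star_alg.induct)
  case (gen f) then show ?case by (auto intro: star_alg.gen)
next
  case zero then show ?case by (simp add: psi_zero star_alg.zero)
next
  case (add f g) then show ?case using star_Ext[OF S] by (simp add: psi_add star_alg.add)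
next
  case (smult f c) then show ?case using star_Ext[OF S] by (simp add: psi_smult star_alg.smult)
next
  case (mult f g) then show ?case using star_Ext[OF S] by (simp add: psi_mult star_alg.mult)
next
  case (conj f) then show ?case using star_Ext[OF S] by (simp add: psi_cnj star_alg.conj)
qed

lemma star_img2:
  assumes S: "S \<subseteq> Ext A" and F: "F \<in> star_alg (psiA A ` S)"
  shows "\<exists>f\<in>star_alg S. F = psiA A f"
  using F
proof (induction rule: star_alg.induct)
  case (gen F) then show ?case by (auto intro: star_alg.gen)
next
  case zero
  have "(\<lambda>_. 0) \<in> star_alg S" by (rule star_alg.zero)
  then show ?case using psi_zero[of A] by (intro bexI[of _ "\<lambda>_. 0"]) auto
next
  case (add F G)
  then obtain f g where fg: "f \<in> star_alg S" "g \<in> star_alg S" and FG: "F = psiA A f" "G = psiA A g" by blast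
  have "(\<lambda>x. f x + g x) \<in> star_alg S" using fg by (rule star_alg.add)
  moreover have "psiA A (\<lambda>x. f x + g x) = (\<lambda>x. F x + G x)"
    using psi_add[OF star_Ext[OF S fg(1)] star_Ext[OF S fg(2)]] FG by simp
  ultimately show ?case by (intro bexI[of _ "\<lambda>x. f x + g x"]) auto
next
  case (smult F c)
  then obtain f where fg: "f \<in> star_alg S" and FG: "F = psiA A f" by blast
  have "(\<lambda>x. c * f x) \<in> star_alg S" using fg by (rule star_alg.smult)
  moreover have "psiA A (\<lambda>x. c * f x) = (\<lambda>x. c * F x)"
    using psi_smult[OF star_Ext[OF S fg]] FG by simp
  ultimately show ?case by (intro bexI[of _ "\<lambda>x. c * f x"]) auto
next
  case (mult F G)
  then obtain f g where fg: "f \<in> star_alg S" "g \<in> star_alg S" and FG: "F = psiA A f" "G = psiA A g" by blast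
  have "(\<lambda>x. f x * g x) \<in> star_alg S" using fg by (rule star_alg.mult)
  moreover have "psiA A (\<lambda>x. f x * g x) = (\<lambda>x. F x * G x)"
    using psi_mult[OF star_Ext[OF S fg(1)] star_Ext[OF S fg(2)]] FG by simp
  ultimately show ?case by (intro bexI[of _ "\<lambda>x. f x * g x"]) auto
next
  case (conj F)
  then obtain f where fg: "f \<in> star_alg S" and FG: "F = psiA A f" by blast
  have "(\<lambda>x. cnj (f x)) \<in> star_alg S" using fg by (rule star_alg.conj)
  moreover have "psiA A (\<lambda>x. cnj (f x)) = (\<lambda>x. cnj (F x))"
    using psi_cnj[OF star_Ext[OF S fg]] FG by simp
  ultimately show ?case by (intro bexI[of _ "\<lambda>x. cnj (f x)"]) auto
qed

lemma cstar_img: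
  assumes S: "S \<subseteq> Ext A"
  shows "psiA A ` cstar_gen S = cstar_gen (psiA A ` S)"
proof
  show "psiA A ` cstar_gen S \<subseteq> cstar_gen (psiA A ` S)"
  proof
    fix F assume "F \<in> psiA A ` cstar_gen S"
    then obtain f where f: "f \<in> cstar_gen S" and F: "F = psiA A f" by blast
    have fE: "f \<in> Ext A" using cstar_Ext[OF S] f by blast
    show "F \<in> cstar_gen (psiA A ` S)" unfolding cstar_gen_def
    proof (intro CollectI allI impI)
      fix e :: real assume e: "e > 0"
      then obtain g where g: "g \<in> star_alg S" and b: "\<forall>x. cmod (f x - g x) \<le> e"
        using f unfolding cstar_gen_def by blast
      have gE: "g \<in> Ext A" using star_Ext[OF S g] .
      have "\<forall>\<xi>. cmod (F \<xi> - psiA A g \<xi>) \<le> e"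
        using psi_iso1[OF fE gE _ b] e F by simp
      then show "\<exists>G\<in>star_alg (psiA A ` S). \<forall>x. cmod (F x - G x) \<le> e"
        using star_img1[OF S g] by blast
    qed
  qed
  show "cstar_gen (psiA A ` S) \<subseteq> psiA A ` cstar_gen S"
  proof
    fix F assume F: "F \<in> cstar_gen (psiA A ` S)"
    define f where "f j = F (xi j)" for j
    have approx: "\<exists>g\<in>star_alg S. (\<forall>x. cmod (f x - g x) \<le> e) \<and> (\<forall>\<xi>. cmod (F \<xi> - psiA A g \<xi>) \<le> e)"
      if e: "e > 0" for e
    proof -
      obtain G where G: "G \<in> star_alg (psiA A ` S)" and b: "\<forall>\<xi>. cmod (F \<xi> - G \<xi>) \<le> e"
        using F e unfolding cstar_gen_def by blast
      obtain g where g: "g \<in> star_alg S" and Gg: "G = psiA A g" using star_img2[OF S G] by blast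
      have "\<forall>x. cmod (f x - g x) \<le> e"
      proof
        fix x
        have "cmod (F (xi x) - G (xi x)) \<le> e" using b by blast
        then show "cmod (f x - g x) \<le> e" using Gg psi_xi[OF star_Ext[OF S g], of x] by (simp add: f_def)
      qed
      then show ?thesis using g b Gg by blast
    qed
    have fc: "f \<in> cstar_gen S" unfolding cstar_gen_def using approx by blast
    have fE: "f \<in> Ext A" using cstar_Ext[OF S] fc by blast
    have "psiA A f = F"
    proof
      fix \<xi>
      show "psiA A f \<xi> = F \<xi>"
      proof -
        have "cmod (psiA A f \<xi> - F \<xi>) \<le> 2 * inverse (real (Suc n))" for n
        proof -
          have e: "inverse (real (Suc n)) > 0" by simp
          obtain g where g: "g \<in> star_alg S" and b1: "\<forall>x. cmod (f x - g x) \<le> inverse (real (Suc n))"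
            and b2: "\<forall>\<xi>. cmod (F \<xi> - psiA A g \<xi>) \<le> inverse (real (Suc n))"
            using approx[OF e] by blast
          have "cmod (psiA A f \<xi> - psiA A g \<xi>) \<le> inverse (real (Suc n))"
            using psi_iso1[OF fE star_Ext[OF S g] _ b1] by simp
          moreover have "cmod (psiA A f \<xi> - F \<xi>) \<le> cmod (psiA A f \<xi> - psiA A g \<xi>) + cmod (psiA A g \<xi> - F \<xi>)"
            by (rule norm_tri3)
          moreover have "cmod (psiA A g \<xi> - F \<xi>) \<le> inverse (real (Suc n))"
            using b2 by (simp add: norm_minus_commute)
          ultimately show ?thesis by linarith
        qed
        then show ?thesis using small_zero[of "psiA A f \<xi> - F \<xi>" 2] by simp
      qed
    qed
    then show "F \<in> psiA A ` cstar_gen S" using fc by blast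
  qed
qed

end


theorem proposition3p5:
  fixes A :: "'g \<Rightarrow> 'g \<Rightarrow> bool"
  assumes nonzero_rows: "\<forall>i. \<exists>j. A i j"
  shows "continuous_map (subtopology powtop (OmegaTilde A)) Gamma_top phiA
       \<and> phiA ` OmegaTilde A = GammaTilde A
       \<and> phiA ` Omega A = Gamma A
       \<and> (\<forall>f\<in>RAtilde A. continuous_map (subtopology powtop (OmegaTilde A)) euclidean (psiA A f))
       \<and> (\<forall>f\<in>RAtilde A. \<forall>g\<in>RAtilde A. psiA A (\<lambda>x. f x + g x) = (\<lambda>\<xi>. psiA A f \<xi> + psiA A g \<xi>))
       \<and> (\<forall>f\<in>RAtilde A. \<forall>c. psiA A (\<lambda>x. c * f x) = (\<lambda>\<xi>. c * psiA A f \<xi>))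
       \<and> (\<forall>f\<in>RAtilde A. \<forall>g\<in>RAtilde A. psiA A (\<lambda>x. f x * g x) = (\<lambda>\<xi>. psiA A f \<xi> * psiA A g \<xi>))
       \<and> (\<forall>f\<in>RAtilde A. psiA A (\<lambda>x. cnj (f x)) = (\<lambda>\<xi>. cnj (psiA A f \<xi>)))
       \<and> psiA A (\<lambda>_. 1) = charfun (OmegaTilde A)
       \<and> inj_on (psiA A) (RAtilde A)
       \<and> (\<forall>i. psiA A (delta i) = PA A i)
       \<and> (\<forall>i. psiA A (rho A i) = QA A i)
       \<and> psiA A ` RAtilde A
           = cstar_gen ({charfun (OmegaTilde A)} \<union> {PA A i | i. True} \<union> {QA A i | i. True})
       \<and> psiA A ` RA A = cstar_gen ({PA A i | i. True} \<union> {QA A i | i. True})"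
proof -
  let ?S1 = "{\<lambda>_. 1} \<union> {rho A i | i. True} \<union> {delta i | i. True}"
  let ?S2 = "{rho A i | i. True} \<union> {delta i | i. True}"
  have g1: "?S1 \<subseteq> Ext A"
    using isext_1[of A] isext_rho[of A] isext_delta[of A] by (auto simp: Ext_def)
  have g2: "?S2 \<subseteq> Ext A" using g1 by blast
  have R1: "RAtilde A \<subseteq> Ext A" unfolding RAtilde_def by (rule cstar_Ext[OF g1])
  have R2: "RA A \<subseteq> Ext A" unfolding RA_def by (rule cstar_Ext[OF g2])
  have rd: "{rho A i | i. True} = range (rho A)" "{delta i | i. True} = range delta"
    "{PA A i | i. True} = range (PA A)" "{QA A i | i. True} = range (QA A)" by auto
  have ir: "psiA A ` range (rho A) = range (QA A)" by (simp add: image_image psi_rho)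
  have id: "psiA A ` range delta = range (PA A)" by (simp add: image_image psi_delta)
  have i1: "psiA A ` ?S1 = {charfun (OmegaTilde A)} \<union> {PA A i | i. True} \<union> {QA A i | i. True}"
    unfolding rd image_Un ir id by (auto simp: psi_one)
  have i2: "psiA A ` ?S2 = {PA A i | i. True} \<union> {QA A i | i. True}"
    unfolding rd image_Un ir id by auto
  have im1: "psiA A ` RAtilde A = cstar_gen ({charfun (OmegaTilde A)} \<union> {PA A i | i. True} \<union> {QA A i | i. True})"
    unfolding RAtilde_def cstar_img[OF nonzero_rows g1] i1 ..
  have im2: "psiA A ` RA A = cstar_gen ({PA A i | i. True} \<union> {QA A i | i. True})"
    unfolding RA_def cstar_img[OF nonzero_rows g2] i2 ..
  have inj: "inj_on (psiA A) (RAtilde A)"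
    using psi_inj[OF nonzero_rows] R1 by (auto simp: inj_on_def)
  show ?thesis
  proof (intro conjI)
    show "continuous_map (subtopology powtop (OmegaTilde A)) Gamma_top phiA" by (rule cont_phi_OT)
    show "phiA ` OmegaTilde A = GammaTilde A" by (rule phi_surj[OF nonzero_rows])
    show "phiA ` Omega A = Gamma A" by (rule phi_surj_Omega[OF nonzero_rows])
    show "\<forall>f\<in>RAtilde A. continuous_map (subtopology powtop (OmegaTilde A)) euclidean (psiA A f)"
      by (intro ballI psi_cont) (use R1 in blast)
    show "\<forall>f\<in>RAtilde A. \<forall>g\<in>RAtilde A. psiA A (\<lambda>x. f x + g x) = (\<lambda>\<xi>. psiA A f \<xi> + psiA A g \<xi>)"
      by (intro ballI psi_add) (use R1 in blast)+
    show "\<forall>f\<in>RAtilde A. \<forall>c. psiA A (\<lambda>x. c * f x) = (\<lambda>\<xi>. c * psiA A f \<xi>)"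
      by (intro ballI allI psi_smult) (use R1 in blast)
    show "\<forall>f\<in>RAtilde A. \<forall>g\<in>RAtilde A. psiA A (\<lambda>x. f x * g x) = (\<lambda>\<xi>. psiA A f \<xi> * psiA A g \<xi>)"
      by (intro ballI psi_mult) (use R1 in blast)+
    show "\<forall>f\<in>RAtilde A. psiA A (\<lambda>x. cnj (f x)) = (\<lambda>\<xi>. cnj (psiA A f \<xi>))"
      by (intro ballI psi_cnj) (use R1 in blast)
    show "psiA A (\<lambda>_. 1) = charfun (OmegaTilde A)" by (rule psi_one)
    show "inj_on (psiA A) (RAtilde A)" by (rule inj)
    show "\<forall>i. psiA A (delta i) = PA A i" by (simp add: psi_delta)
    show "\<forall>i. psiA A (rho A i) = QA A i" by (simp add: psi_rho)
    show "psiA A ` RAtilde A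
           = cstar_gen ({charfun (OmegaTilde A)} \<union> {PA A i | i. True} \<union> {QA A i | i. True})" by (rule im1)
    show "psiA A ` RA A = cstar_gen ({PA A i | i. True} \<union> {QA A i | i. True})" by (rule im2)
  qed
qed


end
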